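(* (1) Let $R$ be one of the following graphs with a distinguished vertex $v$: a star $S_r$ with $r\ge 2$ leaves and center $v$; a healthy spider $S(0,r)$ with $r\ge2$ feet and head $v$; a cycle $C_n$ with $n\ge5$ and $v\in V(C_n)$ arbitrary; a path $P_n$ with $n\ge5$ and $v$ a support vertex of $P_n$. Let $H$ be a graph with no isolated vertices, $V(H)\cap V(R)=\emptyset$, and let $u\in V(H)$ be such that some $\gamma_{tR}(H)$-function $f$ satisfies $f(u)>0$ (and $f(u)=2$ in the case $R=S(0,r)$). Let $G$ be obtained from the disjoint union $H\cup R$ by adding $s$ edges, one of which is $uv$. Then $b_{tR}(G)\le s$. (2) If a graph $G$ (with no isolated vertices) has adjacent support vertices $u,v$ such that $v$ is adjacent to $r\ge2$ leaves, then $b_{tR}(G)\le \deg(v)-r$.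
   Context: A TRDF on $G=(V,E)$ is a function $f:V\to\{0,1,2\}$ such that every $v$ with $f(v)=0$ has a neighbor $u$ with $f(u)=2$ and the subgraph induced by $\{v:f(v)>0\}$ has no isolated vertices; $\gamma_{tR}(G)$ is its minimum weight, and a $\gamma_{tR}(G)$-function is a TRDF of weight $\gamma_{tR}(G)$. $b_{tR}(G)$ is the minimum $|E'|$ such that $G-E'$ has no isolated vertices and $\gamma_{tR}(G-E')>\gamma_{tR}(G)$ ($\infty$ if none). A leaf is a vertex of degree 1; a support vertex is a vertex adjacent to a leaf. The healthy spider $S(0,r)$ is the star $K_{1,r}$ with every edge subdivided once; its center is the head and the vertices at distance 2 from the head are the feet. *)

theory Defs
  imports Main "HOL-Library.Extended_Nat"
begin

definition graph :: "'a set \<Rightarrow> 'a set set \<Rightarrow> bool" where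
  "graph V E \<longleftrightarrow> finite V \<and> (\<forall>e\<in>E. \<exists>x y. x \<in> V \<and> y \<in> V \<and> x \<noteq> y \<and> e = {x, y})"

definition deg :: "'a set set \<Rightarrow> 'a \<Rightarrow> nat" where
  "deg E x = card {y. {x, y} \<in> E}"

definition no_isolated :: "'a set \<Rightarrow> 'a set set \<Rightarrow> bool" where
  "no_isolated V E \<longleftrightarrow> (\<forall>x\<in>V. \<exists>y. {x, y} \<in> E)"

definition leaf :: "'a set \<Rightarrow> 'a set set \<Rightarrow> 'a \<Rightarrow> bool" where
  "leaf V E x \<longleftrightarrow> x \<in> V \<and> deg E x = 1"

definition support_vertex :: "'a set \<Rightarrow> 'a set set \<Rightarrow> 'a \<Rightarrow> bool" where
  "support_vertex V E x \<longleftrightarrow> x \<in> V \<and> (\<exists>y. {x, y} \<in> E \<and> leaf V E y)"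

definition trdf :: "'a set \<Rightarrow> 'a set set \<Rightarrow> ('a \<Rightarrow> nat) \<Rightarrow> bool" where
  "trdf V E f \<longleftrightarrow> (\<forall>x\<in>V. f x \<le> 2)
     \<and> (\<forall>x\<in>V. f x = 0 \<longrightarrow> (\<exists>y. {x, y} \<in> E \<and> f y = 2))
     \<and> (\<forall>x\<in>V. f x > 0 \<longrightarrow> (\<exists>y. {x, y} \<in> E \<and> f y > 0))"

definition gamma_tR :: "'a set \<Rightarrow> 'a set set \<Rightarrow> nat" where
  "gamma_tR V E = (LEAST w. \<exists>f. trdf V E f \<and> sum f V = w)"

definition gamma_tR_fun :: "'a set \<Rightarrow> 'a set set \<Rightarrow> ('a \<Rightarrow> nat) \<Rightarrow> bool" where
  "gamma_tR_fun V E f \<longleftrightarrow> trdf V E f \<and> sum f V = gamma_tR V E"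

text \<open>Total Roman bondage number; the infimum of the empty set is \<infinity>.\<close>
definition b_tR :: "'a set \<Rightarrow> 'a set set \<Rightarrow> enat" where
  "b_tR V E = (INF E' \<in> {E'. E' \<subseteq> E \<and> no_isolated V (E - E') \<and> gamma_tR V (E - E') > gamma_tR V E}.
                 enat (card E'))"

definition graph_iso :: "nat set \<Rightarrow> nat set set \<Rightarrow> 'a set \<Rightarrow> 'a set set \<Rightarrow> (nat \<Rightarrow> 'a) \<Rightarrow> bool" where
  "graph_iso V0 E0 V E \<phi> \<longleftrightarrow> bij_betw \<phi> V0 V \<and> E = (\<lambda>e. \<phi> ` e) ` E0"

definition star_V :: "nat \<Rightarrow> nat set" where "star_V r = {0..r}"
definition star_E :: "nat \<Rightarrow> nat set set" where "star_E r = {{0, i} | i. i \<in> {1..r}}"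

text \<open>Healthy spider S(0,r): head 0, middle vertices 1..r, feet r+1..2r (foot i+r below i).\<close>
definition spider_V :: "nat \<Rightarrow> nat set" where "spider_V r = {0..2*r}"
definition spider_E :: "nat \<Rightarrow> nat set set" where
  "spider_E r = {{0, i} | i. i \<in> {1..r}} \<union> {{i, i + r} | i. i \<in> {1..r}}"

definition cycle_V :: "nat \<Rightarrow> nat set" where "cycle_V n = {..<n}"
definition cycle_E :: "nat \<Rightarrow> nat set set" where "cycle_E n = {{i, Suc i mod n} | i. i < n}"
definition path_V :: "nat \<Rightarrow> nat set" where "path_V n = {..<n}"
definition path_E :: "nat \<Rightarrow> nat set set" where "path_E n = {{i, Suc i} | i. Suc i < n}"

end

theory Submission
  imports Defs
begin

definition ntr :: "'a set \<Rightarrow> 'a set set \<Rightarrow> ('a \<Rightarrow> nat) \<Rightarrow> 'a \<Rightarrow> bool \<Rightarrow> bool" where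
 "ntr V E g v c \<longleftrightarrow> (\<forall>x\<in>V. g x \<le> 2
    \<and> (g x = 0 \<longrightarrow> (\<exists>y\<in>V. {x,y}\<in>E \<and> g y = 2) \<or> (x = v \<and> c))
    \<and> (0 < g x \<longrightarrow> (\<exists>y\<in>V. {x,y}\<in>E \<and> 0 < g y) \<or> x = v))"

lemma gamma_le: "trdf V E f \<Longrightarrow> gamma_tR V E \<le> sum f V"
  unfolding gamma_tR_def by (rule Least_le) blast

lemma gamma_ex: "trdf V E f \<Longrightarrow> \<exists>h. trdf V E h \<and> sum h V = gamma_tR V E"
  unfolding gamma_tR_def using LeastI_ex[of "\<lambda>w. \<exists>f. trdf V E f \<and> sum f V = w"] by blast

lemma ones_trdf: "no_isolated V E \<Longrightarrow> trdf V E (\<lambda>_. 1)"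
  unfolding trdf_def no_isolated_def by auto

lemma combine:
  assumes gH: "graph VH EH" and niH: "no_isolated VH EH"
    and disj: "VH \<inter> VR = {}" and uH: "u \<in> VH"
    and erV: "\<And>x y. {x,y} \<in> ER \<Longrightarrow> x \<in> VR"
    and finR: "finite VR" and niR: "no_isolated VR ER"
    and lb: "\<And>h. trdf VR ER h \<Longrightarrow> k \<le> sum h VR"
    and gn: "ntr VR ER g v c" and gs: "sum g VR < k"
    and fH: "gamma_tR_fun VH EH f" and fu: "0 < f u" and fc: "c \<longrightarrow> f u = 2"
    and Fd: "F \<inter> (EH \<union> ER) = {}" and uvF: "{u,v} \<in> F"
  shows "b_tR (VH \<union> VR) (EH \<union> ER \<union> F) \<le> enat (card F)"
proof -
  have finH: "finite VH" using gH[unfolded graph_def] by (rule conjunct1)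
  have ehV: "x \<in> VH \<and> y \<in> VH" if xy: "{x,y} \<in> EH" for x y
  proof -
    have "\<forall>e\<in>EH. \<exists>x y. x \<in> VH \<and> y \<in> VH \<and> x \<noteq> y \<and> e = {x, y}" using gH[unfolded graph_def] by (rule conjunct2)
    then obtain a b where "a \<in> VH" "b \<in> VH" "{x,y} = {a,b}" using xy by meson
    then show ?thesis by (metis insert_iff doubleton_eq_iff)
  qed
  define w where "w x = (if x \<in> VH then f x else g x)" for x
  have ftr: "trdf VH EH f" using fH unfolding gamma_tR_fun_def by blast
  have wtr: "trdf (VH \<union> VR) (EH \<union> ER \<union> F) w"
    unfolding trdf_def
  proof (intro conjI ballI impI)
    fix x assume x: "x \<in> VH \<union> VR"
    show "w x \<le> 2"
    proof (cases "x \<in> VH")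
      case True then show ?thesis using ftr unfolding trdf_def w_def by auto
    next
      case False then have "x \<in> VR" using x by blast
      then show ?thesis using gn False unfolding ntr_def w_def by auto
    qed
  next
    fix x assume x: "x \<in> VH \<union> VR" and w0: "w x = 0"
    show "\<exists>y. {x,y} \<in> EH \<union> ER \<union> F \<and> w y = 2"
    proof (cases "x \<in> VH")
      case True
      then have "f x = 0" using w0 w_def by simp
      then obtain y where y: "{x,y} \<in> EH" "f y = 2" using ftr True unfolding trdf_def by blast
      then have "y \<in> VH" using ehV by blast
      then show ?thesis using y w_def by auto
    next
      case False then have xR: "x \<in> VR" using x by blast
      have "g x = 0" using w0 False w_def by simp
      then have "(\<exists>y\<in>VR. {x,y}\<in>ER \<and> g y = 2) \<or> (x = v \<and> c)" using gn xR unfolding ntr_def by blast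
      then show ?thesis
      proof
        assume "\<exists>y\<in>VR. {x,y}\<in>ER \<and> g y = 2"
        then obtain y where "y \<in> VR" "{x,y}\<in>ER" "g y = 2" by blast
        moreover have "y \<notin> VH" using \<open>y\<in>VR\<close> disj by blast
        ultimately show ?thesis unfolding w_def by auto
      next
        assume "x = v \<and> c"
        then have "{x,u} \<in> F" using uvF by (metis insert_commute)
        moreover have "w u = 2" using fc \<open>x = v \<and> c\<close> uH by (simp add: w_def)
        ultimately show ?thesis by blast
      qed
    qed
  next
    fix x assume x: "x \<in> VH \<union> VR" and w0: "0 < w x"
    show "\<exists>y. {x,y} \<in> EH \<union> ER \<union> F \<and> 0 < w y"
    proof (cases "x \<in> VH")
      case True
      then have "0 < f x" using w0 w_def by simp
      then obtain y where y: "{x,y} \<in> EH" "0 < f y" using ftr True unfolding trdf_def by blast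
      then have "y \<in> VH" using ehV by blast
      then show ?thesis using y w_def by auto
    next
      case False then have xR: "x \<in> VR" using x by blast
      have "0 < g x" using w0 False w_def by simp
      then have "(\<exists>y\<in>VR. {x,y}\<in>ER \<and> 0 < g y) \<or> x = v" using gn xR unfolding ntr_def by blast
      then show ?thesis
      proof
        assume "\<exists>y\<in>VR. {x,y}\<in>ER \<and> 0 < g y"
        then obtain y where "y \<in> VR" "{x,y}\<in>ER" "0 < g y" by blast
        moreover have "y \<notin> VH" using \<open>y\<in>VR\<close> disj by blast
        ultimately show ?thesis unfolding w_def by auto
      next
        assume "x = v"
        then have "{x,u} \<in> F" using uvF by (metis insert_commute)
        moreover have "0 < w u" using fu uH by (simp add: w_def)
        ultimately show ?thesis by blast
      qed
    qed
  qed
  have sw: "sum w (VH \<union> VR) = sum f VH + sum g VR"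
  proof -
    have "sum w (VH \<union> VR) = sum w VH + sum w VR" using sum.union_disjoint[OF finH finR disj] .
    moreover have "sum w VH = sum f VH" by (rule sum.cong) (auto simp: w_def)
    moreover have "sum w VR = sum g VR" by (rule sum.cong) (use disj in \<open>auto simp: w_def\<close>)
    ultimately show ?thesis by simp
  qed
  have g1: "gamma_tR (VH \<union> VR) (EH \<union> ER \<union> F) \<le> sum f VH + sum g VR"
    using gamma_le[OF wtr] sw by simp
  have EF: "EH \<union> ER \<union> F - F = EH \<union> ER" using Fd by blast
  have niHR: "no_isolated (VH \<union> VR) (EH \<union> ER)" using niH niR unfolding no_isolated_def by blast
  obtain h where h: "trdf (VH \<union> VR) (EH \<union> ER) h" "sum h (VH \<union> VR) = gamma_tR (VH \<union> VR) (EH \<union> ER)"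
    using gamma_ex[OF ones_trdf[OF niHR]] by blast
  have nR: "\<And>x y. x \<in> VH \<Longrightarrow> {x,y} \<in> ER \<Longrightarrow> False" using erV disj by blast
  have nH: "\<And>x y. x \<in> VR \<Longrightarrow> {x,y} \<in> EH \<Longrightarrow> False" using ehV disj by blast
  have hA: "\<And>x. x \<in> VH \<union> VR \<Longrightarrow> h x \<le> 2"
    and hB: "\<And>x. x \<in> VH \<union> VR \<Longrightarrow> h x = 0 \<Longrightarrow> \<exists>y. {x,y} \<in> EH \<union> ER \<and> h y = 2"
    and hC: "\<And>x. x \<in> VH \<union> VR \<Longrightarrow> 0 < h x \<Longrightarrow> \<exists>y. {x,y} \<in> EH \<union> ER \<and> 0 < h y"
    using h(1) unfolding trdf_def by auto
  have hH: "trdf VH EH h"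
    unfolding trdf_def
  proof (intro conjI ballI impI)
    fix x assume x: "x \<in> VH"
    then have x': "x \<in> VH \<union> VR" by blast
    show "h x \<le> 2" using hA[OF x'] .
    show "\<exists>y. {x,y} \<in> EH \<and> h y = 2" if h0: "h x = 0"
    proof -
      obtain y where "{x,y} \<in> EH \<union> ER" "h y = 2" using hB[OF x' h0] by blast
      then show ?thesis using nR[OF x] by blast
    qed
    show "\<exists>y. {x,y} \<in> EH \<and> 0 < h y" if h0: "0 < h x"
    proof -
      obtain y where "{x,y} \<in> EH \<union> ER" "0 < h y" using hC[OF x' h0] by blast
      then show ?thesis using nR[OF x] by blast
    qed
  qed
  have hR: "trdf VR ER h"
    unfolding trdf_def
  proof (intro conjI ballI impI)
    fix x assume x: "x \<in> VR"
    then have x': "x \<in> VH \<union> VR" by blast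
    show "h x \<le> 2" using hA[OF x'] .
    show "\<exists>y. {x,y} \<in> ER \<and> h y = 2" if h0: "h x = 0"
    proof -
      obtain y where "{x,y} \<in> EH \<union> ER" "h y = 2" using hB[OF x' h0] by blast
      then show ?thesis using nH[OF x] by blast
    qed
    show "\<exists>y. {x,y} \<in> ER \<and> 0 < h y" if h0: "0 < h x"
    proof -
      obtain y where "{x,y} \<in> EH \<union> ER" "0 < h y" using hC[OF x' h0] by blast
      then show ?thesis using nH[OF x] by blast
    qed
  qed
  have "sum h (VH \<union> VR) = sum h VH + sum h VR" using sum.union_disjoint[OF finH finR disj] .
  moreover have "sum f VH \<le> sum h VH" using gamma_le[OF hH] fH unfolding gamma_tR_fun_def by simp
  moreover have "k \<le> sum h VR" using lb[OF hR] .
  ultimately have lt: "gamma_tR (VH \<union> VR) (EH \<union> ER \<union> F) < gamma_tR (VH \<union> VR) (EH \<union> ER \<union> F - F)"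
    using g1 gs h(2) EF by simp
  have "F \<in> {E'. E' \<subseteq> EH \<union> ER \<union> F \<and> no_isolated (VH \<union> VR) (EH \<union> ER \<union> F - E')
      \<and> gamma_tR (VH \<union> VR) (EH \<union> ER \<union> F - E') > gamma_tR (VH \<union> VR) (EH \<union> ER \<union> F)}"
    using lt niHR EF by simp
  then show ?thesis unfolding b_tR_def by (rule INF_lower)
qed


definition tedges :: "'b set \<Rightarrow> 'b set set \<Rightarrow> bool" where
  "tedges V0 E0 \<longleftrightarrow> (\<forall>e\<in>E0. \<exists>a b. a \<in> V0 \<and> b \<in> V0 \<and> e = {a,b})"

lemma doubleton_cases: "{x,y} = {a,b} \<Longrightarrow> (x = a \<and> y = b) \<or> (x = b \<and> y = a)"
  by (metis doubleton_eq_iff)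

lemma iso_edge: assumes "graph_iso V0 E0 V E \<phi>" "{a,b} \<in> E0" shows "{\<phi> a, \<phi> b} \<in> E"
proof -
  have E: "E = (\<lambda>e. \<phi> ` e) ` E0" using assms(1) unfolding graph_iso_def by blast
  have "\<phi> ` {a,b} \<in> (\<lambda>e. \<phi> ` e) ` E0" using assms(2) by (rule imageI)
  then show ?thesis using E by simp
qed

lemma iso_nbr:
  assumes iso: "graph_iso V0 E0 V E \<phi>" and te: "tedges V0 E0" and i: "i \<in> V0"
    and e: "{\<phi> i, y} \<in> E"
  shows "\<exists>j\<in>V0. y = \<phi> j \<and> {i,j} \<in> E0"
proof -
  have inj: "inj_on \<phi> V0" and EE: "E = (\<lambda>e. \<phi> ` e) ` E0" using iso unfolding graph_iso_def bij_betw_def by auto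
  obtain e0 where e0: "e0 \<in> E0" "{\<phi> i, y} = \<phi> ` e0" using e EE by blast
  obtain a b where ab: "a \<in> V0" "b \<in> V0" "e0 = {a,b}" using te e0(1) unfolding tedges_def by meson
  have "{\<phi> i, y} = {\<phi> a, \<phi> b}" using e0(2) ab(3) by simp
  then have "(\<phi> i = \<phi> a \<and> y = \<phi> b) \<or> (\<phi> i = \<phi> b \<and> y = \<phi> a)" by (rule doubleton_cases)
  then show ?thesis
  proof
    assume h: "\<phi> i = \<phi> a \<and> y = \<phi> b"
    then have "i = a" using inj i ab(1) by (meson inj_on_eq_iff)
    then show ?thesis using h ab e0(1) by blast
  next
    assume h: "\<phi> i = \<phi> b \<and> y = \<phi> a"
    then have "i = b" using inj i ab(2) by (meson inj_on_eq_iff)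
    then have "{i,a} \<in> E0" using ab e0(1) by (simp add: insert_commute)
    then show ?thesis using h ab by blast
  qed
qed

lemma iso_basic:
  assumes iso: "graph_iso V0 E0 V E \<phi>" and te: "tedges V0 E0" and fin: "finite V0"
    and ni: "no_isolated V0 E0"
  shows "finite V" "\<And>x y. {x,y} \<in> E \<Longrightarrow> x \<in> V" "no_isolated V E"
proof -
  have VV: "V = \<phi> ` V0" and EE: "E = (\<lambda>e. \<phi> ` e) ` E0" using iso unfolding graph_iso_def bij_betw_def by auto
  show "finite V" using VV fin by simp
  show "x \<in> V" if xy: "{x,y} \<in> E" for x y
  proof -
    obtain e0 where e0: "e0 \<in> E0" "{x, y} = \<phi> ` e0" using xy EE by blast
    obtain a b where ab: "a \<in> V0" "b \<in> V0" "e0 = {a,b}" using te e0(1) unfolding tedges_def by meson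
    have "x \<in> \<phi> ` e0" using e0(2) by (metis insertI1)
    then show ?thesis using ab VV by auto
  qed
  show "no_isolated V E" unfolding no_isolated_def
  proof
    fix x assume "x \<in> V"
    then obtain i where i: "i \<in> V0" "x = \<phi> i" using VV by blast
    then obtain j where "{i,j} \<in> E0" using ni unfolding no_isolated_def by blast
    then have "{\<phi> i, \<phi> j} \<in> E" using iso_edge[OF iso] by blast
    then show "\<exists>y. {x,y} \<in> E" using i by blast
  qed
qed

lemma pullback:
  assumes iso: "graph_iso V0 E0 V E \<phi>" and te: "tedges V0 E0" and tr: "trdf V E g"
  shows "trdf V0 E0 (\<lambda>x. g (\<phi> x))" "sum g V = sum (\<lambda>x. g (\<phi> x)) V0"
proof -
  have bij: "bij_betw \<phi> V0 V" using iso unfolding graph_iso_def by blast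
  then have VV: "V = \<phi> ` V0" unfolding bij_betw_def by blast
  show "sum g V = sum (\<lambda>x. g (\<phi> x)) V0" by (rule sym[OF sum.reindex_bij_betw[OF bij]])
  show "trdf V0 E0 (\<lambda>x. g (\<phi> x))" unfolding trdf_def
  proof (intro conjI ballI impI)
    fix x assume x: "x \<in> V0"
    then have x': "\<phi> x \<in> V" using VV by blast
    show "g (\<phi> x) \<le> 2" using tr x' unfolding trdf_def by blast
    show "\<exists>y. {x,y} \<in> E0 \<and> g (\<phi> y) = 2" if h0: "g (\<phi> x) = 0"
    proof -
      obtain y where y: "{\<phi> x, y} \<in> E" "g y = 2" using tr x' h0 unfolding trdf_def by blast
      obtain j where "j \<in> V0" "y = \<phi> j" "{x,j} \<in> E0" using iso_nbr[OF iso te x y(1)] by blast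
      then show ?thesis using y by blast
    qed
    show "\<exists>y. {x,y} \<in> E0 \<and> 0 < g (\<phi> y)" if h0: "0 < g (\<phi> x)"
    proof -
      obtain y where y: "{\<phi> x, y} \<in> E" "0 < g y" using tr x' h0 unfolding trdf_def by blast
      obtain j where "j \<in> V0" "y = \<phi> j" "{x,j} \<in> E0" using iso_nbr[OF iso te x y(1)] by blast
      then show ?thesis using y by blast
    qed
  qed
qed

lemma push:
  assumes bij: "bij_betw \<psi> V0 V"
    and ed: "\<And>a b. a \<in> V0 \<Longrightarrow> b \<in> V0 \<Longrightarrow> {a,b} \<in> E0 \<Longrightarrow> {\<psi> a, \<psi> b} \<in> E"
    and nt: "ntr V0 E0 h v0 c"
  shows "ntr V E (\<lambda>y. h (inv_into V0 \<psi> y)) (\<psi> v0) c"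
    "sum (\<lambda>y. h (inv_into V0 \<psi> y)) V = sum h V0"
proof -
  have inj: "inj_on \<psi> V0" and VV: "V = \<psi> ` V0" using bij unfolding bij_betw_def by auto
  have iv: "inv_into V0 \<psi> (\<psi> x) = x" if "x \<in> V0" for x using inv_into_f_f[OF inj that] .
  have "sum (\<lambda>x. h (inv_into V0 \<psi> (\<psi> x))) V0 = sum (\<lambda>y. h (inv_into V0 \<psi> y)) V"
    using sum.reindex_bij_betw[OF bij] .
  moreover have "sum (\<lambda>x. h (inv_into V0 \<psi> (\<psi> x))) V0 = sum h V0" using iv by simp
  ultimately show "sum (\<lambda>y. h (inv_into V0 \<psi> y)) V = sum h V0" by simp
  show "ntr V E (\<lambda>y. h (inv_into V0 \<psi> y)) (\<psi> v0) c" unfolding ntr_def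
  proof
    fix y assume "y \<in> V"
    then obtain x where x: "x \<in> V0" "y = \<psi> x" using VV by blast
    have P: "h x \<le> 2
      \<and> (h x = 0 \<longrightarrow> (\<exists>z\<in>V0. {x,z}\<in>E0 \<and> h z = 2) \<or> (x = v0 \<and> c))
      \<and> (0 < h x \<longrightarrow> (\<exists>z\<in>V0. {x,z}\<in>E0 \<and> 0 < h z) \<or> x = v0)" using nt x(1) unfolding ntr_def by blast
    have Q: "\<And>z. z \<in> V0 \<Longrightarrow> {x,z} \<in> E0 \<Longrightarrow> \<psi> z \<in> V \<and> {y, \<psi> z} \<in> E \<and> h (inv_into V0 \<psi> (\<psi> z)) = h z"
    proof -
      fix z assume z: "z \<in> V0" "{x,z} \<in> E0"
      show "\<psi> z \<in> V \<and> {y, \<psi> z} \<in> E \<and> h (inv_into V0 \<psi> (\<psi> z)) = h z"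
        using ed[OF x(1) z(1) z(2)] x(2) iv[OF z(1)] VV z(1) by simp
    qed
    have hy: "h (inv_into V0 \<psi> y) = h x" using iv[OF x(1)] x(2) by simp
    show "h (inv_into V0 \<psi> y) \<le> 2
      \<and> (h (inv_into V0 \<psi> y) = 0 \<longrightarrow> (\<exists>z\<in>V. {y,z}\<in>E \<and> h (inv_into V0 \<psi> z) = 2) \<or> (y = \<psi> v0 \<and> c))
      \<and> (0 < h (inv_into V0 \<psi> y) \<longrightarrow> (\<exists>z\<in>V. {y,z}\<in>E \<and> 0 < h (inv_into V0 \<psi> z)) \<or> y = \<psi> v0)"
      unfolding hy
    proof (intro conjI impI)
      show "h x \<le> 2" using P by blast
    next
      assume "h x = 0"
      then have "(\<exists>z\<in>V0. {x,z}\<in>E0 \<and> h z = 2) \<or> (x = v0 \<and> c)" using P by blast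
      then show "(\<exists>z\<in>V. {y,z}\<in>E \<and> h (inv_into V0 \<psi> z) = 2) \<or> (y = \<psi> v0 \<and> c)"
      proof
        assume "\<exists>z\<in>V0. {x,z}\<in>E0 \<and> h z = 2"
        then obtain z where z: "z \<in> V0" "{x,z} \<in> E0" "h z = 2" by blast
        have "\<psi> z \<in> V \<and> {y, \<psi> z} \<in> E \<and> h (inv_into V0 \<psi> (\<psi> z)) = h z" using Q[OF z(1,2)] .
        then show ?thesis using z(3) by auto
      next
        assume "x = v0 \<and> c" then show ?thesis using x(2) by blast
      qed
    next
      assume "0 < h x"
      then have "(\<exists>z\<in>V0. {x,z}\<in>E0 \<and> 0 < h z) \<or> x = v0" using P by blast
      then show "(\<exists>z\<in>V. {y,z}\<in>E \<and> 0 < h (inv_into V0 \<psi> z)) \<or> y = \<psi> v0"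
      proof
        assume "\<exists>z\<in>V0. {x,z}\<in>E0 \<and> 0 < h z"
        then obtain z where z: "z \<in> V0" "{x,z} \<in> E0" "0 < h z" by blast
        have "\<psi> z \<in> V \<and> {y, \<psi> z} \<in> E \<and> h (inv_into V0 \<psi> (\<psi> z)) = h z" using Q[OF z(1,2)] .
        then show ?thesis using z(3) by auto
      next
        assume "x = v0" then show ?thesis using x(2) by blast
      qed
    qed
  qed
qed


lemma deg2_lb:
  assumes fin: "finite V" and ev: "\<And>x y. x \<in> V \<Longrightarrow> {x,y} \<in> E \<Longrightarrow> y \<in> V"
    and d2: "\<And>x a b c. x \<in> V \<Longrightarrow> {x,a} \<in> E \<Longrightarrow> {x,b} \<in> E \<Longrightarrow> {x,c} \<in> E \<Longrightarrow> a = b \<or> a = c \<or> b = c"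
    and tr: "trdf V E h"
  shows "card V \<le> sum h V"
proof -
  define Z where "Z = {x\<in>V. h x = 0}"
  define On where "On = {x\<in>V. h x = 1}"
  define T where "T = {x\<in>V. h x = 2}"
  have le2: "\<And>x. x \<in> V \<Longrightarrow> h x \<le> 2" using tr unfolding trdf_def by blast
  have zt: "\<And>x. x \<in> V \<Longrightarrow> h x = 0 \<Longrightarrow> \<exists>y. {x,y} \<in> E \<and> h y = 2" using tr unfolding trdf_def by blast
  have pp: "\<And>x. x \<in> V \<Longrightarrow> 0 < h x \<Longrightarrow> \<exists>y. {x,y} \<in> E \<and> 0 < h y" using tr unfolding trdf_def by blast
  have VU: "V = Z \<union> On \<union> T" unfolding Z_def On_def T_def using le2 by force
  have fZ: "finite Z" "finite On" "finite T" using fin unfolding Z_def On_def T_def by auto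
  have d1: "Z \<inter> On = {}" "(Z \<union> On) \<inter> T = {}" unfolding Z_def On_def T_def by auto
  have cV: "card V = card Z + card On + card T"
    using VU card_Un_disjoint[OF _ _ d1(1)] card_Un_disjoint[OF _ _ d1(2)] fZ by simp
  have sV: "sum h V = sum h Z + sum h On + sum h T"
  proof -
    have "finite (Z \<union> On)" using fZ by simp
    then show ?thesis using VU sum.union_disjoint[OF fZ(1) fZ(2) d1(1), of h] sum.union_disjoint[OF _ fZ(3) d1(2), of h] by simp
  qed
  have "sum h Z = 0" unfolding Z_def by simp
  moreover have "sum h On = card On" unfolding On_def by simp
  moreover have "sum h T = 2 * card T" unfolding T_def by simp
  ultimately have sV': "sum h V = card On + 2 * card T" using sV by simp
  define p where "p z = (SOME t. {z,t} \<in> E \<and> h t = 2)" for z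
  have pz: "{z, p z} \<in> E \<and> h (p z) = 2" if "z \<in> Z" for z
  proof -
    have "\<exists>t. {z,t} \<in> E \<and> h t = 2" using zt that unfolding Z_def by blast
    then show ?thesis unfolding p_def by (rule someI_ex)
  qed
  have pT: "p ` Z \<subseteq> T"
  proof
    fix t assume "t \<in> p ` Z"
    then obtain z where z: "z \<in> Z" "t = p z" by blast
    have "z \<in> V" using z(1) unfolding Z_def by blast
    then have "t \<in> V" using ev pz[OF z(1)] z(2) by (metis insert_commute)
    then show "t \<in> T" using pz[OF z(1)] z(2) unfolding T_def by simp
  qed
  have inj: "inj_on p Z"
  proof (rule inj_onI)
    fix z1 z2 assume z1: "z1 \<in> Z" and z2: "z2 \<in> Z" and eq: "p z1 = p z2"
    define t where "t = p z1"
    have tT: "t \<in> T" using pT z1 t_def by blast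
    then have tV: "t \<in> V" and t2: "h t = 2" unfolding T_def by auto
    obtain w where w: "{t,w} \<in> E" "0 < h w" using pp[OF tV] t2 by auto
    have e1: "{t,z1} \<in> E" using pz[OF z1] t_def by (simp add: insert_commute)
    have e2: "{t,z2} \<in> E" using pz[OF z2] t_def eq by (simp add: insert_commute)
    have "z1 = z2 \<or> z1 = w \<or> z2 = w" using d2[OF tV e1 e2 w(1)] .
    moreover have "h z1 = 0" "h z2 = 0" using z1 z2 unfolding Z_def by auto
    ultimately show "z1 = z2" using w(2) by auto
  qed
  have "card Z \<le> card T" using card_inj_on_le[OF inj pT fZ(3)] .
  then show ?thesis using cV sV' by simp
qed

lemma star_lb:
  assumes vL: "v \<notin> L" and fin: "finite L" and c2: "2 \<le> card L"
    and tr: "trdf (insert v L) {{v,l} | l. l \<in> L} h"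
  shows "3 \<le> sum h (insert v L)"
proof -
  let ?E = "{{v,l} | l. l \<in> L}"
  have nb: "y = v" if xy: "x \<in> L" "{x,y} \<in> ?E" for x y
  proof -
    obtain l where "l \<in> L" "{x,y} = {v,l}" using xy(2) by blast
    then show ?thesis using xy(1) vL by (metis doubleton_eq_iff)
  qed
  have nbv: "y \<in> L" if vy: "{v,y} \<in> ?E" for y
  proof -
    obtain l where "l \<in> L" "{v,y} = {v,l}" using vy by blast
    then show ?thesis using vL by (metis doubleton_eq_iff)
  qed
  have s: "sum h (insert v L) = h v + sum h L" using vL fin by simp
  obtain l1 l2 where l: "l1 \<in> L" "l2 \<in> L" "l1 \<noteq> l2"
  proof -
    have "\<exists>l1 l2. l1 \<in> L \<and> l2 \<in> L \<and> l1 \<noteq> l2"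
    proof (rule ccontr)
      assume "\<not> ?thesis"
      then have "card L \<le> Suc 0" using card_le_Suc0_iff_eq[OF fin] by blast
      then show False using c2 by simp
    qed
    then show ?thesis using that by blast
  qed
  have sL: "h l1 + h l2 \<le> sum h L"
  proof -
    have "sum h {l1,l2} \<le> sum h L" using l fin by (intro sum_mono2) auto
    then show ?thesis using l(3) by simp
  qed
  have leaf: "(h l = 0 \<longrightarrow> h v = 2) \<and> (0 < h l \<longrightarrow> 0 < h v)" if "l \<in> L" for l
  proof -
    have lV: "l \<in> insert v L" using that by blast
    have A: "h l = 0 \<longrightarrow> (\<exists>y. {l,y} \<in> ?E \<and> h y = 2)" using tr lV unfolding trdf_def by blast
    have B: "0 < h l \<longrightarrow> (\<exists>y. {l,y} \<in> ?E \<and> 0 < h y)" using tr lV unfolding trdf_def by blast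
    show ?thesis
    proof (intro conjI impI)
      assume "h l = 0"
      then obtain y where "{l,y} \<in> ?E" "h y = 2" using A by blast
      then show "h v = 2" using nb[OF that] by blast
    next
      assume "0 < h l"
      then obtain y where "{l,y} \<in> ?E" "0 < h y" using B by blast
      then show "0 < h v" using nb[OF that] by blast
    qed
  qed
  show ?thesis
  proof (cases "h v = 2")
    case True
    have "\<exists>y. {v,y} \<in> ?E \<and> 0 < h y" using tr True unfolding trdf_def by auto
    then obtain y where y: "{v,y} \<in> ?E" "0 < h y" by blast
    have "y \<in> L" using nbv y(1) .
    then have "h y \<le> sum h L" using fin by (intro member_le_sum) auto
    then show ?thesis using s True y(2) by simp
  next
    case False
    then have "0 < h l1" "0 < h l2" using leaf l by auto
    then have "0 < h v" using leaf l by auto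
    then show ?thesis using s sL \<open>0 < h l1\<close> \<open>0 < h l2\<close> by simp
  qed
qed


lemma spider_edge: "{x,y} \<in> spider_E r \<longleftrightarrow> (x = 0 \<and> 1 \<le> y \<and> y \<le> r) \<or> (y = 0 \<and> 1 \<le> x \<and> x \<le> r)
   \<or> (1 \<le> x \<and> x \<le> r \<and> y = x + r) \<or> (1 \<le> y \<and> y \<le> r \<and> x = y + r)"
  unfolding spider_E_def by (auto simp: doubleton_eq_iff)

lemma cycle_edge: "{x,y} \<in> cycle_E n \<longleftrightarrow> (x < n \<and> y = Suc x mod n) \<or> (y < n \<and> x = Suc y mod n)"
  unfolding cycle_E_def by (auto simp: doubleton_eq_iff)

lemma path_edge: "{x,y} \<in> path_E n \<longleftrightarrow> (Suc x < n \<and> y = Suc x) \<or> (Suc y < n \<and> x = Suc y)"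
  unfolding path_E_def by (auto simp: doubleton_eq_iff)

lemma spider_te: "tedges (spider_V r) (spider_E r)"
  unfolding tedges_def
proof
  fix e assume "e \<in> spider_E r"
  then have "e \<in> {{0, i} |i. i \<in> {1..r}} \<or> e \<in> {{i, i + r} |i. i \<in> {1..r}}" unfolding spider_E_def by simp
  then show "\<exists>a b. a \<in> spider_V r \<and> b \<in> spider_V r \<and> e = {a, b}"
  proof (elim disjE)
    assume "e \<in> {{0, i} |i. i \<in> {1..r}}"
    then obtain i where i: "i \<in> {1..r}" "e = {0,i}" by blast
    have V: "0 \<in> spider_V r" "i \<in> spider_V r" using i unfolding spider_V_def by auto
    show ?thesis using V i(2) by (intro exI[of _ 0] exI[of _ i]) simp
  next
    assume "e \<in> {{i, i + r} |i. i \<in> {1..r}}"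
    then obtain i where i: "i \<in> {1..r}" "e = {i,i+r}" by blast
    have V: "i + r \<in> spider_V r" "i \<in> spider_V r" using i unfolding spider_V_def by auto
    show ?thesis using V i(2) by (intro exI[of _ i] exI[of _ "i+r"]) simp
  qed
qed

lemma spider_ni: "1 \<le> r \<Longrightarrow> no_isolated (spider_V r) (spider_E r)"
  unfolding no_isolated_def spider_V_def
proof
  fix x assume r: "1 \<le> r" and x: "x \<in> {0..2*r}"
  show "\<exists>y. {x,y} \<in> spider_E r"
  proof (cases "x = 0")
    case True then have "{x,1} \<in> spider_E r" using r by (simp add: spider_edge)
    then show ?thesis by blast
  next
    case False
    show ?thesis
    proof (cases "x \<le> r")
      case True then have "{x,0} \<in> spider_E r" using False by (simp add: spider_edge)
      then show ?thesis by blast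
    next
      case F2: False
      have "1 \<le> x - r \<and> x - r \<le> r \<and> x = (x - r) + r" using x F2 unfolding spider_V_def by auto
      then have "{x,x-r} \<in> spider_E r" unfolding spider_edge by blast
      then show ?thesis by blast
    qed
  qed
qed

lemma spider_split: "sum h (spider_V r) = h 0 + (\<Sum>i\<in>{1..r}. h i + h (i + r))"
proof -
  have U: "spider_V r = insert 0 ({1..r} \<union> (\<lambda>i. i + r) ` {1..r})"
  proof
    show "spider_V r \<subseteq> insert 0 ({1..r} \<union> (\<lambda>i. i + r) ` {1..r})"
    proof
      fix x assume x: "x \<in> spider_V r"
      show "x \<in> insert 0 ({1..r} \<union> (\<lambda>i. i + r) ` {1..r})"
      proof (cases "x \<le> r")
        case True
        then have "x = 0 \<or> x \<in> {1..r}" by auto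
        then show ?thesis by blast
      next
        case False
        then have "x = (x - r) + r" "x - r \<in> {1..r}" using x unfolding spider_V_def by auto
        then show ?thesis by blast
      qed
    qed
    show "insert 0 ({1..r} \<union> (\<lambda>i. i + r) ` {1..r}) \<subseteq> spider_V r" unfolding spider_V_def by auto
  qed
  have d: "{1..r} \<inter> (\<lambda>i. i + r) ` {1..r} = {}" by auto
  have inj: "inj_on (\<lambda>i. i + r) {1..r}" by (simp add: inj_on_def)
  have "sum h (spider_V r) = h 0 + sum h ({1..r} \<union> (\<lambda>i. i + r) ` {1..r})"
    unfolding U by (subst sum.insert) auto
  also have "\<dots> = h 0 + (sum h {1..r} + sum h ((\<lambda>i. i + r) ` {1..r}))"
    using sum.union_disjoint[OF _ _ d, of h] by simp
  also have "sum h ((\<lambda>i. i + r) ` {1..r}) = (\<Sum>i\<in>{1..r}. h (i + r))"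
    using sum.reindex[OF inj, of h] by simp
  finally show ?thesis by (simp add: sum.distrib)
qed

lemma spider_lb:
  assumes r: "1 \<le> r" and tr: "trdf (spider_V r) (spider_E r) h"
  shows "2 * r + 1 \<le> sum h (spider_V r)"
proof -
  have A: "\<And>x. x \<in> spider_V r \<Longrightarrow> h x = 0 \<Longrightarrow> \<exists>y. {x,y} \<in> spider_E r \<and> h y = 2"
   and B: "\<And>x. x \<in> spider_V r \<Longrightarrow> 0 < h x \<Longrightarrow> \<exists>y. {x,y} \<in> spider_E r \<and> 0 < h y"
    using tr unfolding trdf_def by blast+
  have leg: "2 \<le> h i + h (i + r)" if i: "i \<in> {1..r}" for i
  proof -
    have iV: "i + r \<in> spider_V r" using i unfolding spider_V_def by auto
    have nb: "y = i" if "{i + r, y} \<in> spider_E r" for y using that i by (auto simp: spider_edge)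
    show ?thesis
    proof (cases "h (i + r) = 0")
      case True
      then obtain y where "{i + r, y} \<in> spider_E r" "h y = 2" using A[OF iV] by blast
      then have "h i = 2" using nb by metis
      then show ?thesis by simp
    next
      case False
      then obtain y where "{i + r, y} \<in> spider_E r" "0 < h y" using B[OF iV] by blast
      then show ?thesis using nb False by fastforce
    qed
  qed
  have sl: "2 * r \<le> (\<Sum>i\<in>{1..r}. h i + h (i + r))"
  proof -
    have "(\<Sum>i\<in>{1..r}. (2::nat)) \<le> (\<Sum>i\<in>{1..r}. h i + h (i + r))" using leg by (intro sum_mono) auto
    then show ?thesis by simp
  qed
  show ?thesis
  proof (cases "h 0 = 0")
    case False then show ?thesis using sl spider_split[of h r] by simp
  next
    case True
    have 0: "0 \<in> spider_V r" unfolding spider_V_def by simp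
    obtain y where y: "{0,y} \<in> spider_E r" "h y = 2" using A[OF 0 True] by blast
    have yr: "y \<in> {1..r}" using y(1) by (auto simp: spider_edge)
    then have yV: "y \<in> spider_V r" unfolding spider_V_def by auto
    obtain z where z: "{y,z} \<in> spider_E r" "0 < h z" using B[OF yV] y(2) by auto
    have "z = 0 \<or> z = y + r" using z(1) yr by (auto simp: spider_edge)
    then have "z = y + r" using z(2) True by auto
    then have l3: "3 \<le> h y + h (y + r)" using z(2) y(2) by simp
    have "(\<Sum>i\<in>{1..r}. h i + h (i + r)) = (h y + h (y + r)) + (\<Sum>i\<in>{1..r} - {y}. h i + h (i + r))"
      using yr by (simp add: sum.remove)
    moreover have "2 * card ({1..r} - {y}) \<le> (\<Sum>i\<in>{1..r} - {y}. h i + h (i + r))"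
    proof -
      have "(\<Sum>i\<in>{1..r} - {y}. (2::nat)) \<le> (\<Sum>i\<in>{1..r} - {y}. h i + h (i + r))" using leg by (intro sum_mono) auto
      then show ?thesis by simp
    qed
    moreover have "card ({1..r} - {y}) = r - 1" using yr by simp
    ultimately show ?thesis using l3 r spider_split[of h r] by simp
  qed
qed

lemma spider_ntr:
  assumes r: "1 \<le> r"
  shows "ntr (spider_V r) (spider_E r) (\<lambda>k. if k = 0 then 0 else 1) 0 True"
    "sum (\<lambda>k. if k = 0 then 0 else (1::nat)) (spider_V r) = 2 * r"
proof -
  show "sum (\<lambda>k. if k = 0 then 0 else (1::nat)) (spider_V r) = 2 * r"
  proof -
    have "spider_V r = insert 0 {1..2*r}" unfolding spider_V_def by auto
    then have "sum (\<lambda>k. if k = 0 then 0 else (1::nat)) (spider_V r) = sum (\<lambda>k. if k = 0 then 0 else (1::nat)) {1..2*r}"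
      by simp
    also have "\<dots> = sum (\<lambda>k. 1) {1..2*r}" by (rule sum.cong) auto
    finally show ?thesis by simp
  qed
  show "ntr (spider_V r) (spider_E r) (\<lambda>k. if k = 0 then 0 else 1) 0 True"
    unfolding ntr_def
  proof
    fix x assume x: "x \<in> spider_V r"
    show "(if x = 0 then 0 else 1) \<le> (2::nat) \<and>
         ((if x = 0 then 0 else 1) = (0::nat) \<longrightarrow>
          (\<exists>y\<in>spider_V r. {x, y} \<in> spider_E r \<and> (if y = 0 then 0 else 1) = (2::nat)) \<or> x = 0 \<and> True) \<and>
         (0 < (if x = 0 then 0 else (1::nat)) \<longrightarrow>
          (\<exists>y\<in>spider_V r. {x, y} \<in> spider_E r \<and> 0 < (if y = 0 then 0 else (1::nat))) \<or> x = 0)"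
    proof (cases "x = 0")
      case True then show ?thesis by simp
    next
      case False
      show ?thesis
      proof (cases "x \<le> r")
        case True
        then have "x + r \<in> spider_V r" "{x, x + r} \<in> spider_E r" "x + r \<noteq> 0"
          using False unfolding spider_V_def by (auto simp: spider_edge)
        then show ?thesis using False by auto
      next
        case F2: False
        have a: "1 \<le> x - r \<and> x - r \<le> r \<and> x = (x - r) + r" using x F2 unfolding spider_V_def by auto
        then have "{x, x - r} \<in> spider_E r" unfolding spider_edge by blast
        moreover have "x - r \<in> spider_V r" "x - r \<noteq> 0" using a unfolding spider_V_def by auto
        ultimately show ?thesis using False by (auto intro!: bexI[where x="x - r"])
      qed
    qed
  qed
qed


lemma suc_mod_inj: "a < n \<Longrightarrow> b < n \<Longrightarrow> Suc a mod n = Suc b mod n \<Longrightarrow> a = b"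
  by (auto simp: mod_Suc split: if_splits)

lemma cycle_te: "0 < n \<Longrightarrow> tedges (cycle_V n) (cycle_E n)"
  unfolding tedges_def
proof
  fix e assume n: "0 < n" and "e \<in> cycle_E n"
  then obtain i where i: "i < n" "e = {i, Suc i mod n}" unfolding cycle_E_def by blast
  have V: "i \<in> cycle_V n" "Suc i mod n \<in> cycle_V n" using i n unfolding cycle_V_def by auto
  show "\<exists>a b. a \<in> cycle_V n \<and> b \<in> cycle_V n \<and> e = {a, b}"
    using V i(2) by (intro exI[of _ i] exI[of _ "Suc i mod n"]) simp
qed

lemma cycle_ni: "0 < n \<Longrightarrow> no_isolated (cycle_V n) (cycle_E n)"
  unfolding no_isolated_def cycle_V_def
proof
  fix x assume "0 < n" "x \<in> {..<n}"
  then have "{x, Suc x mod n} \<in> cycle_E n" by (simp add: cycle_edge)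
  then show "\<exists>y. {x, y} \<in> cycle_E n" by blast
qed

lemma cycle_lb:
  assumes n: "0 < n" and tr: "trdf (cycle_V n) (cycle_E n) h"
  shows "n \<le> sum h (cycle_V n)"
proof -
  have "card (cycle_V n) \<le> sum h (cycle_V n)"
  proof (rule deg2_lb[OF _ _ _ tr])
    show "finite (cycle_V n)" unfolding cycle_V_def by simp
    show "y \<in> cycle_V n" if "x \<in> cycle_V n" "{x, y} \<in> cycle_E n" for x y
      using that n unfolding cycle_V_def by (auto simp: cycle_edge)
    show "a = b \<or> a = c \<or> b = c" if "x \<in> cycle_V n" "{x, a} \<in> cycle_E n" "{x, b} \<in> cycle_E n" "{x, c} \<in> cycle_E n" for x a b c
    proof -
      have "\<And>z. {x, z} \<in> cycle_E n \<Longrightarrow> z = Suc x mod n \<or> (z < n \<and> x = Suc z mod n)"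
        by (auto simp: cycle_edge)
      then have A: "a = Suc x mod n \<or> (a < n \<and> x = Suc a mod n)" "b = Suc x mod n \<or> (b < n \<and> x = Suc b mod n)"
        "c = Suc x mod n \<or> (c < n \<and> x = Suc c mod n)" using that by blast+
      show ?thesis using A suc_mod_inj by metis
    qed
  qed
  then show ?thesis unfolding cycle_V_def by simp
qed

definition hc :: "nat \<Rightarrow> nat \<Rightarrow> nat" where
  "hc n k = (if k = 0 then 2 else if k = 1 \<or> k = n - 1 then 0 else 1)"

lemma cycle_ntr:
  assumes n: "5 \<le> n"
  shows "ntr (cycle_V n) (cycle_E n) (hc n) 0 False" "sum (hc n) (cycle_V n) < n"
proof -
  have U: "cycle_V n = {0, 1, n - 1} \<union> {2..<n-1}" unfolding cycle_V_def using n by auto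
  have "sum (hc n) (cycle_V n) = sum (hc n) {0, 1, n - 1} + sum (hc n) {2..<n-1}"
    unfolding U by (rule sum.union_disjoint) auto
  also have "sum (hc n) {0, 1, n - 1} = 2" using n by (simp add: hc_def)
  also have "sum (hc n) {2..<n-1} = sum (\<lambda>_. 1) {2..<n-1}" by (rule sum.cong) (auto simp: hc_def)
  finally show "sum (hc n) (cycle_V n) < n" using n by simp
  show "ntr (cycle_V n) (cycle_E n) (hc n) 0 False"
    unfolding ntr_def
  proof
    fix x assume x: "x \<in> cycle_V n"
    then have xn: "x < n" unfolding cycle_V_def by simp
    have "hc n x \<le> 2" by (simp add: hc_def)
    moreover have "hc n x = 0 \<longrightarrow> (\<exists>y\<in>cycle_V n. {x, y} \<in> cycle_E n \<and> hc n y = 2)"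
    proof
      assume "hc n x = 0"
      then have "x = 1 \<or> x = n - 1" by (auto simp: hc_def split: if_splits)
      moreover have "0 \<in> cycle_V n" "hc n 0 = 2" using n by (auto simp: cycle_V_def hc_def)
      moreover have "{1, 0} \<in> cycle_E n" using n by (simp add: cycle_edge)
      moreover have "{n - 1, 0} \<in> cycle_E n" using n by (simp add: cycle_edge)
      ultimately show "\<exists>y\<in>cycle_V n. {x, y} \<in> cycle_E n \<and> hc n y = 2" by blast
    qed
    moreover have "0 < hc n x \<longrightarrow> (\<exists>y\<in>cycle_V n. {x, y} \<in> cycle_E n \<and> 0 < hc n y) \<or> x = 0"
    proof
      assume "0 < hc n x"
      show "(\<exists>y\<in>cycle_V n. {x, y} \<in> cycle_E n \<and> 0 < hc n y) \<or> x = 0"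
      proof (cases "x = 0")
        case True then show ?thesis by blast
      next
        case False
        then have x2: "2 \<le> x" "x \<le> n - 2" using \<open>0 < hc n x\<close> xn by (auto simp: hc_def split: if_splits)
        show ?thesis
        proof (cases "x + 1 \<le> n - 2")
          case True
          have "{x, Suc x} \<in> cycle_E n" using True n by (simp add: cycle_edge)
          moreover have "Suc x \<in> cycle_V n" "0 < hc n (Suc x)" using True n x2 unfolding cycle_V_def hc_def by auto
          ultimately show ?thesis by blast
        next
          case F: False
          then have xe: "x = n - 2" using x2 by simp
          have "{x, n - 3} \<in> cycle_E n" using xe n by (simp add: cycle_edge) arith
          moreover have "n - 3 \<in> cycle_V n" "0 < hc n (n - 3)" using n unfolding cycle_V_def hc_def by auto
          ultimately show ?thesis by blast
        qed
      qed
    qed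
    ultimately show "hc n x \<le> 2 \<and> (hc n x = 0 \<longrightarrow> (\<exists>y\<in>cycle_V n. {x, y} \<in> cycle_E n \<and> hc n y = 2) \<or> x = 0 \<and> False)
       \<and> (0 < hc n x \<longrightarrow> (\<exists>y\<in>cycle_V n. {x, y} \<in> cycle_E n \<and> 0 < hc n y) \<or> x = 0)" by blast
  qed
qed

lemma rot_bij:
  assumes n: "0 < (n::nat)" and i0: "i0 < n"
  shows "bij_betw (\<lambda>k. (k + i0) mod n) {..<n} {..<n}"
proof -
  have inj: "inj_on (\<lambda>k. (k + i0) mod n) {..<n}"
  proof (rule inj_onI)
    fix a b assume a: "a \<in> {..<n}" and b: "b \<in> {..<n}" and eq: "(a + i0) mod n = (b + i0) mod n"
    have "((a + i0) mod n + (n - i0)) mod n = ((b + i0) mod n + (n - i0)) mod n" using eq by simp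
    then have "(a + i0 + (n - i0)) mod n = (b + i0 + (n - i0)) mod n" by (simp add: mod_add_left_eq)
    then have "(a + n) mod n = (b + n) mod n" using i0 by simp
    then show "a = b" using a b by simp
  qed
  have "(\<lambda>k. (k + i0) mod n) ` {..<n} \<subseteq> {..<n}" using n by auto
  then have "(\<lambda>k. (k + i0) mod n) ` {..<n} = {..<n}" using endo_inj_surj[OF _ _ inj] by simp
  then show ?thesis using inj unfolding bij_betw_def by simp
qed

lemma rot_edge:
  assumes n: "0 < n" and e: "{a, b} \<in> cycle_E n"
  shows "{(a + i0) mod n, (b + i0) mod n} \<in> cycle_E n"
proof -
  have key: "(Suc a mod n + i0) mod n = Suc ((a + i0) mod n) mod n" for a
  proof -
    have "(Suc a mod n + i0) mod n = (Suc a + i0) mod n" by (simp add: mod_add_left_eq)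
    moreover have "Suc ((a + i0) mod n) mod n = Suc (a + i0) mod n" by (simp add: mod_Suc_eq)
    ultimately show ?thesis by simp
  qed
  from e have "(a < n \<and> b = Suc a mod n) \<or> (b < n \<and> a = Suc b mod n)" by (simp add: cycle_edge)
  then show ?thesis
  proof
    assume "a < n \<and> b = Suc a mod n"
    then show ?thesis using key[of a] n by (simp add: cycle_edge)
  next
    assume "b < n \<and> a = Suc b mod n"
    then show ?thesis using key[of b] n by (simp add: cycle_edge)
  qed
qed

lemma path_te: "tedges (path_V n) (path_E n)"
  unfolding tedges_def
proof
  fix e assume "e \<in> path_E n"
  then obtain i where i: "Suc i < n" "e = {i, Suc i}" unfolding path_E_def by blast
  have V: "i \<in> path_V n" "Suc i \<in> path_V n" using i unfolding path_V_def by auto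
  show "\<exists>a b. a \<in> path_V n \<and> b \<in> path_V n \<and> e = {a, b}"
    using V i(2) by (intro exI[of _ i] exI[of _ "Suc i"]) simp
qed

lemma path_ni: "2 \<le> n \<Longrightarrow> no_isolated (path_V n) (path_E n)"
  unfolding no_isolated_def path_V_def
proof
  fix x assume n: "2 \<le> n" and x: "x \<in> {..<n}"
  show "\<exists>y. {x, y} \<in> path_E n"
  proof (cases "Suc x < n")
    case True
    then have "{x, Suc x} \<in> path_E n" by (simp add: path_edge)
    then show ?thesis by blast
  next
    case False
    then have "{x, x - 1} \<in> path_E n" using n x by (simp add: path_edge)
    then show ?thesis by blast
  qed
qed

lemma path_lb:
  assumes tr: "trdf (path_V n) (path_E n) h"
  shows "n \<le> sum h (path_V n)"
proof -
  have "card (path_V n) \<le> sum h (path_V n)"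
  proof (rule deg2_lb[OF _ _ _ tr])
    show "finite (path_V n)" unfolding path_V_def by simp
    show "y \<in> path_V n" if "x \<in> path_V n" "{x, y} \<in> path_E n" for x y
      using that unfolding path_V_def by (auto simp: path_edge)
    show "a = b \<or> a = c \<or> b = c" if "x \<in> path_V n" "{x, a} \<in> path_E n" "{x, b} \<in> path_E n" "{x, c} \<in> path_E n" for x a b c
    proof -
      have "\<And>z. {x, z} \<in> path_E n \<Longrightarrow> z = Suc x \<or> Suc z = x"
        by (auto simp: path_edge)
      then have A: "a = Suc x \<or> Suc a = x" "b = Suc x \<or> Suc b = x" "c = Suc x \<or> Suc c = x" using that by blast+
      show ?thesis using A by auto
    qed
  qed
  then show ?thesis unfolding path_V_def by simp
qed

definition hp :: "nat \<Rightarrow> nat" where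
  "hp k = (if k = 1 then 2 else if k = 0 \<or> k = 2 then 0 else 1)"

lemma path_ntr:
  assumes n: "5 \<le> n"
  shows "ntr (path_V n) (path_E n) hp 1 False" "sum hp (path_V n) < n"
proof -
  have U: "path_V n = {0, 1, 2} \<union> {3..<n}" unfolding path_V_def using n by auto
  have "sum hp (path_V n) = sum hp {0, 1, 2} + sum hp {3..<n}"
    unfolding U by (rule sum.union_disjoint) auto
  also have "sum hp {0, 1, 2} = 2" by (simp add: hp_def)
  also have "sum hp {3..<n} = sum (\<lambda>_. 1) {3..<n}" by (rule sum.cong) (auto simp: hp_def)
  finally show "sum hp (path_V n) < n" using n by simp
  show "ntr (path_V n) (path_E n) hp 1 False"
    unfolding ntr_def
  proof
    fix x assume x: "x \<in> path_V n"
    then have xn: "x < n" unfolding path_V_def by simp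
    have "hp x \<le> 2" by (simp add: hp_def)
    moreover have "hp x = 0 \<longrightarrow> (\<exists>y\<in>path_V n. {x, y} \<in> path_E n \<and> hp y = 2)"
    proof
      assume "hp x = 0"
      then have "x = 0 \<or> x = 2" by (auto simp: hp_def split: if_splits)
      moreover have "1 \<in> path_V n" "hp 1 = 2" using n by (auto simp: path_V_def hp_def)
      moreover have "{0, 1} \<in> path_E n" using n by (simp add: path_edge)
      moreover have "{2, 1} \<in> path_E n" using n by (simp add: path_edge)
      ultimately show "\<exists>y\<in>path_V n. {x, y} \<in> path_E n \<and> hp y = 2" by blast
    qed
    moreover have "0 < hp x \<longrightarrow> (\<exists>y\<in>path_V n. {x, y} \<in> path_E n \<and> 0 < hp y) \<or> x = 1"
    proof
      assume "0 < hp x"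
      show "(\<exists>y\<in>path_V n. {x, y} \<in> path_E n \<and> 0 < hp y) \<or> x = 1"
      proof (cases "x = 1")
        case True then show ?thesis by blast
      next
        case False
        then have x3: "3 \<le> x" using \<open>0 < hp x\<close> xn by (auto simp: hp_def split: if_splits)
        show ?thesis
        proof (cases "Suc x < n")
          case True
          have "{x, Suc x} \<in> path_E n" using True by (simp add: path_edge)
          moreover have "Suc x \<in> path_V n" "0 < hp (Suc x)" using True x3 unfolding path_V_def hp_def by auto
          ultimately show ?thesis by blast
        next
          case F: False
          then have xe: "x = n - 1" using xn by simp
          have "{x, x - 1} \<in> path_E n" using xe n by (simp add: path_edge) arith
          moreover have "x - 1 \<in> path_V n" "0 < hp (x - 1)" using n xe unfolding path_V_def hp_def by auto
          ultimately show ?thesis by blast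
        qed
      qed
    qed
    ultimately show "hp x \<le> 2 \<and> (hp x = 0 \<longrightarrow> (\<exists>y\<in>path_V n. {x, y} \<in> path_E n \<and> hp y = 2) \<or> x = 1 \<and> False)
       \<and> (0 < hp x \<longrightarrow> (\<exists>y\<in>path_V n. {x, y} \<in> path_E n \<and> 0 < hp y) \<or> x = 1)" by blast
  qed
qed

lemma refl_bij: "bij_betw (\<lambda>k. n - 1 - k) {..<(n::nat)} {..<n}"
proof -
  have inj: "inj_on (\<lambda>k. n - 1 - k) {..<n}" by (rule inj_onI) auto
  have "(\<lambda>k. n - 1 - k) ` {..<n} \<subseteq> {..<n}" by auto
  then have img: "(\<lambda>k. n - 1 - k) ` {..<n} = {..<n}" using endo_inj_surj[OF _ _ inj] by blast
  show ?thesis unfolding bij_betw_def using inj img by blast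
qed

lemma refl_edge:
  assumes e: "{a, b} \<in> path_E n"
  shows "{n - 1 - a, n - 1 - b} \<in> path_E n"
proof -
  from e have "(Suc a < n \<and> b = Suc a) \<or> (Suc b < n \<and> a = Suc b)" by (simp add: path_edge)
  then show ?thesis
  proof
    assume "Suc a < n \<and> b = Suc a"
    then show ?thesis by (simp add: path_edge) arith
  next
    assume "Suc b < n \<and> a = Suc b"
    then show ?thesis by (simp add: path_edge) arith
  qed
qed


definition good :: "'a set \<Rightarrow> 'a set set \<Rightarrow> 'a \<Rightarrow> bool \<Rightarrow> bool" where
  "good VR ER v c \<longleftrightarrow> (\<forall>x y. {x,y} \<in> ER \<longrightarrow> x \<in> VR) \<and> finite VR \<and> no_isolated VR ER
     \<and> (\<exists>k g. (\<forall>h. trdf VR ER h \<longrightarrow> k \<le> sum h VR) \<and> ntr VR ER g v c \<and> sum g VR < k)"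

lemma part1:
  assumes gd: "good VR ER v c"
    and gH: "graph VH EH" and niH: "no_isolated VH EH"
    and disj: "VH \<inter> VR = {}" and uH: "u \<in> VH"
    and fH: "gamma_tR_fun VH EH f" and fu: "0 < f u" and fc: "c \<longrightarrow> f u = 2"
    and Fd: "F \<inter> (EH \<union> ER) = {}" and uvF: "{u,v} \<in> F" and s: "card F = s"
  shows "b_tR (VH \<union> VR) (EH \<union> ER \<union> F) \<le> enat s"
proof -
  obtain k g where kg: "\<And>h. trdf VR ER h \<Longrightarrow> k \<le> sum h VR" "ntr VR ER g v c" "sum g VR < k"
    using gd unfolding good_def by blast
  have erV: "\<And>x y. {x,y} \<in> ER \<Longrightarrow> x \<in> VR" and fin: "finite VR" and ni: "no_isolated VR ER"
    using gd unfolding good_def by blast+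
  show ?thesis using combine[OF gH niH disj uH erV fin ni kg(1) kg(2) kg(3) fH fu fc Fd uvF] s by simp
qed

lemma iso_good:
  assumes iso: "graph_iso V0 E0 VR ER \<phi>" and te: "tedges V0 E0" and fin: "finite V0"
    and ni: "no_isolated V0 E0" and lb: "\<And>h. trdf V0 E0 h \<Longrightarrow> k \<le> sum h V0"
    and bij: "bij_betw \<psi> V0 VR"
    and ed: "\<And>a b. a \<in> V0 \<Longrightarrow> b \<in> V0 \<Longrightarrow> {a,b} \<in> E0 \<Longrightarrow> {\<psi> a, \<psi> b} \<in> ER"
    and nt: "ntr V0 E0 h0 v0 c" and sm: "sum h0 V0 < k"
  shows "good VR ER (\<psi> v0) c"
proof -
  have b: "finite VR" "\<And>x y. {x,y} \<in> ER \<Longrightarrow> x \<in> VR" "no_isolated VR ER"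
    using iso_basic[OF iso te fin ni] by blast+
  have lbR: "k \<le> sum h VR" if "trdf VR ER h" for h
    using pullback[OF iso te that] lb by simp
  have "ntr VR ER (\<lambda>y. h0 (inv_into V0 \<psi> y)) (\<psi> v0) c"
    "sum (\<lambda>y. h0 (inv_into V0 \<psi> y)) VR = sum h0 V0" using push[OF bij ed nt] by blast+
  then show ?thesis unfolding good_def using b lbR sm by metis
qed

lemma comp_edge:
  assumes iso: "graph_iso V0 E0 VR ER \<phi>" and sV: "\<And>a. a \<in> V0 \<Longrightarrow> \<sigma> a \<in> V0"
    and sE: "\<And>a b. a \<in> V0 \<Longrightarrow> b \<in> V0 \<Longrightarrow> {a,b} \<in> E0 \<Longrightarrow> {\<sigma> a, \<sigma> b} \<in> E0"
  shows "\<And>a b. a \<in> V0 \<Longrightarrow> b \<in> V0 \<Longrightarrow> {a,b} \<in> E0 \<Longrightarrow> {(\<phi> \<circ> \<sigma>) a, (\<phi> \<circ> \<sigma>) b} \<in> ER"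
  using iso_edge[OF iso] sE by simp

lemma iso_bij: "graph_iso V0 E0 V E \<phi> \<Longrightarrow> bij_betw \<phi> V0 V"
  unfolding graph_iso_def by blast

lemma iso_edge2: "graph_iso V0 E0 V E \<phi> \<Longrightarrow> a \<in> V0 \<Longrightarrow> b \<in> V0 \<Longrightarrow> {a,b} \<in> E0 \<Longrightarrow> {\<phi> a, \<phi> b} \<in> E"
  using iso_edge by blast

lemma star_te: "tedges (star_V r) (star_E r)"
  unfolding tedges_def
proof
  fix e assume "e \<in> star_E r"
  then obtain i where i: "i \<in> {1..r}" "e = {0,i}" unfolding star_E_def by blast
  have V: "0 \<in> star_V r" "i \<in> star_V r" using i unfolding star_V_def by auto
  show "\<exists>a b. a \<in> star_V r \<and> b \<in> star_V r \<and> e = {a, b}"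
    using V i(2) by (intro exI[of _ 0] exI[of _ i]) simp
qed

lemma star_ni: "1 \<le> r \<Longrightarrow> no_isolated (star_V r) (star_E r)"
  unfolding no_isolated_def star_V_def
proof
  fix x assume r: "1 \<le> r" and x: "x \<in> {0..r}"
  show "\<exists>y. {x,y} \<in> star_E r"
  proof (cases "x = 0")
    case True
    then have "{x,1} \<in> star_E r" using r unfolding star_E_def by auto
    then show ?thesis by blast
  next
    case False
    then have "{0,x} \<in> star_E r" using x unfolding star_E_def by auto
    then have "{x,0} \<in> star_E r" by (simp add: insert_commute)
    then show ?thesis by blast
  qed
qed

lemma star_good:
  assumes r: "2 \<le> r" and iso: "graph_iso (star_V r) (star_E r) VR ER \<phi>"
  shows "good VR ER (\<phi> 0) False"
proof (rule iso_good[OF iso star_te _ star_ni _ iso_bij[OF iso] iso_edge2[OF iso]])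
  show "finite (star_V r)" unfolding star_V_def by simp
  show "1 \<le> r" using r by simp
  show "3 \<le> sum h (star_V r)" if "trdf (star_V r) (star_E r) h" for h
  proof -
    have SV: "star_V r = insert 0 {1..r}" unfolding star_V_def by auto
    have SE: "star_E r = {{0, l} | l. l \<in> {1..r}}" unfolding star_E_def by simp
    show ?thesis using star_lb[of 0 "{1..r}" h] that r unfolding SV SE by simp
  qed
  show "ntr (star_V r) (star_E r) (\<lambda>k. if k = 0 then 2 else 0) 0 False"
    unfolding ntr_def
  proof
    fix x assume x: "x \<in> star_V r"
    show "(if x = 0 then 2 else 0) \<le> (2::nat) \<and>
         ((if x = 0 then 2 else 0) = (0::nat) \<longrightarrow>
          (\<exists>y\<in>star_V r. {x, y} \<in> star_E r \<and> (if y = 0 then 2 else 0) = (2::nat)) \<or> x = 0 \<and> False) \<and>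
         (0 < (if x = 0 then 2 else (0::nat)) \<longrightarrow>
          (\<exists>y\<in>star_V r. {x, y} \<in> star_E r \<and> 0 < (if y = 0 then 2 else (0::nat))) \<or> x = 0)"
    proof (cases "x = 0")
      case True then show ?thesis by simp
    next
      case False
      then have "{0,x} \<in> star_E r" using x unfolding star_E_def star_V_def by auto
      then have "{x,0} \<in> star_E r" by (simp add: insert_commute)
      moreover have "0 \<in> star_V r" unfolding star_V_def by simp
      ultimately show ?thesis using False by auto
    qed
  qed
  show "sum (\<lambda>k. if k = 0 then 2 else 0) (star_V r) < (3::nat)"
  proof -
    have "star_V r = insert 0 {1..r}" unfolding star_V_def by auto
    then show ?thesis by simp
  qed
qed

lemma spider_good:
  assumes r: "2 \<le> r" and iso: "graph_iso (spider_V r) (spider_E r) VR ER \<phi>"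
  shows "good VR ER (\<phi> 0) True"
proof (rule iso_good[OF iso spider_te _ spider_ni _ iso_bij[OF iso] iso_edge2[OF iso] spider_ntr(1)])
  show "finite (spider_V r)" unfolding spider_V_def by simp
  show "1 \<le> r" "1 \<le> r" using r by simp_all
  show "2 * r + 1 \<le> sum h (spider_V r)" if "trdf (spider_V r) (spider_E r) h" for h
    using spider_lb[OF _ that] r by simp
  show "sum (\<lambda>k. if k = 0 then 0 else 1) (spider_V r) < 2 * r + 1"
    using spider_ntr(2)[of r] r by simp
qed

lemma cycle_good:
  assumes n: "5 \<le> n" and iso: "graph_iso (cycle_V n) (cycle_E n) VR ER \<phi>" and v: "v \<in> VR"
  shows "good VR ER v False"
proof -
  have n0: "0 < n" using n by simp
  obtain i0 where i0: "i0 < n" "v = \<phi> i0" using v iso unfolding graph_iso_def bij_betw_def cycle_V_def by auto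
  let ?\<sigma> = "\<lambda>k. (k + i0) mod n"
  have bs: "bij_betw ?\<sigma> (cycle_V n) (cycle_V n)" unfolding cycle_V_def using rot_bij[OF n0 i0(1)] .
  have bij: "bij_betw (\<phi> \<circ> ?\<sigma>) (cycle_V n) VR" using bij_betw_trans[OF bs iso_bij[OF iso]] .
  have ed: "\<And>a b. a \<in> cycle_V n \<Longrightarrow> b \<in> cycle_V n \<Longrightarrow> {a,b} \<in> cycle_E n \<Longrightarrow> {(\<phi> \<circ> ?\<sigma>) a, (\<phi> \<circ> ?\<sigma>) b} \<in> ER"
  proof (rule comp_edge[OF iso])
    show "\<And>a. a \<in> cycle_V n \<Longrightarrow> ?\<sigma> a \<in> cycle_V n" using n0 unfolding cycle_V_def by simp
    show "\<And>a b. a \<in> cycle_V n \<Longrightarrow> b \<in> cycle_V n \<Longrightarrow> {a,b} \<in> cycle_E n \<Longrightarrow> {?\<sigma> a, ?\<sigma> b} \<in> cycle_E n"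
      using rot_edge[OF n0] by blast
  qed
  have g: "good VR ER ((\<phi> \<circ> ?\<sigma>) 0) False"
  proof (rule iso_good[OF iso cycle_te[OF n0] _ cycle_ni[OF n0] _ bij ed cycle_ntr(1)[OF n]])
    show "finite (cycle_V n)" unfolding cycle_V_def by simp
    show "n \<le> sum h (cycle_V n)" if "trdf (cycle_V n) (cycle_E n) h" for h using cycle_lb[OF n0 that] .
    show "sum (hc n) (cycle_V n) < n" using cycle_ntr(2)[OF n] .
  qed
  have "(\<phi> \<circ> ?\<sigma>) 0 = v" using i0 by simp
  then show ?thesis using g by simp
qed

lemma path_support:
  assumes n: "5 \<le> n" and iso: "graph_iso (path_V n) (path_E n) VR ER \<phi>"
    and sv: "support_vertex VR ER v"
  shows "v = \<phi> 1 \<or> v = \<phi> (n - 2)"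
proof -
  have n0: "2 \<le> n" using n by simp
  have bij: "bij_betw \<phi> (path_V n) VR" using iso_bij[OF iso] .
  then have inj: "inj_on \<phi> (path_V n)" and VV: "VR = \<phi> ` path_V n" unfolding bij_betw_def by auto
  have bas: "finite VR" "\<And>x y. {x,y} \<in> ER \<Longrightarrow> x \<in> VR"
    using iso_basic[OF iso path_te _ path_ni[OF n0]] unfolding path_V_def by auto
  obtain y where y: "v \<in> VR" "{v,y} \<in> ER" "leaf VR ER y" using sv unfolding support_vertex_def by blast
  obtain i where i: "i \<in> path_V n" "v = \<phi> i" using y(1) VV by blast
  obtain j where j: "j \<in> path_V n" "y = \<phi> j" "{i,j} \<in> path_E n" using iso_nbr[OF iso path_te i(1)] y(2) i(2) by blast
  have dj: "card {z. {\<phi> j, z} \<in> ER} = 1" using y(3) j(2) unfolding leaf_def deg_def by simp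
  have jend: "j = 0 \<or> j = n - 1"
  proof (rule ccontr)
    assume "\<not> (j = 0 \<or> j = n - 1)"
    then have jj: "0 < j" "Suc j < n" using j(1) unfolding path_V_def by auto
    have e1: "{j - 1, j} \<in> path_E n" using jj by (simp add: path_edge)
    have e2: "{j, Suc j} \<in> path_E n" using jj by (simp add: path_edge)
    have V: "j - 1 \<in> path_V n" "j \<in> path_V n" "Suc j \<in> path_V n" using jj unfolding path_V_def by auto
    have a1: "{\<phi> j, \<phi> (j - 1)} \<in> ER" using iso_edge[OF iso e1] by (simp add: insert_commute)
    have a2: "{\<phi> j, \<phi> (Suc j)} \<in> ER" using iso_edge[OF iso e2] .
    have ne: "\<phi> (j - 1) \<noteq> \<phi> (Suc j)" using inj V jj by (metis inj_on_eq_iff diff_less less_Suc_eq zero_less_one nat_neq_iff)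
    have sub: "{\<phi> (j - 1), \<phi> (Suc j)} \<subseteq> {z. {\<phi> j, z} \<in> ER}" using a1 a2 by blast
    have fs: "finite {z. {\<phi> j, z} \<in> ER}"
    proof (rule finite_subset[OF _ bas(1)])
      show "{z. {\<phi> j, z} \<in> ER} \<subseteq> VR" using bas(2) by (metis (no_types, lifting) insert_commute mem_Collect_eq subsetI)
    qed
    have "card {\<phi> (j - 1), \<phi> (Suc j)} \<le> card {z. {\<phi> j, z} \<in> ER}" using card_mono[OF fs sub] .
    then show False using ne dj by simp
  qed
  show ?thesis
  proof (cases "j = 0")
    case True
    then have "i = 1" using j(3) by (auto simp: path_edge)
    then show ?thesis using i by simp
  next
    case False
    then have "j = n - 1" using jend by simp
    then have "i = n - 2" using j(3) i(1) unfolding path_V_def by (auto simp: path_edge)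
    then show ?thesis using i by simp
  qed
qed

lemma path_good:
  assumes n: "5 \<le> n" and iso: "graph_iso (path_V n) (path_E n) VR ER \<phi>"
    and sv: "support_vertex VR ER v"
  shows "good VR ER v False"
proof -
  have n0: "2 \<le> n" using n by simp
  have fin: "finite (path_V n)" unfolding path_V_def by simp
  have lb: "\<And>h. trdf (path_V n) (path_E n) h \<Longrightarrow> n \<le> sum h (path_V n)" using path_lb .
  have nt: "ntr (path_V n) (path_E n) hp 1 False" "sum hp (path_V n) < n" using path_ntr[OF n] by blast+
  from path_support[OF n iso sv] show ?thesis
  proof
    assume v: "v = \<phi> 1"
    have "good VR ER (\<phi> 1) False"
      using iso_good[OF iso path_te fin path_ni[OF n0] lb iso_bij[OF iso] iso_edge2[OF iso] nt(1) nt(2)] .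
    then show ?thesis using v by simp
  next
    assume v: "v = \<phi> (n - 2)"
    let ?\<sigma> = "\<lambda>k. n - 1 - k"
    have bs: "bij_betw ?\<sigma> (path_V n) (path_V n)" unfolding path_V_def using refl_bij .
    have bij: "bij_betw (\<phi> \<circ> ?\<sigma>) (path_V n) VR" using bij_betw_trans[OF bs iso_bij[OF iso]] .
    have ed: "\<And>a b. a \<in> path_V n \<Longrightarrow> b \<in> path_V n \<Longrightarrow> {a,b} \<in> path_E n \<Longrightarrow> {(\<phi> \<circ> ?\<sigma>) a, (\<phi> \<circ> ?\<sigma>) b} \<in> ER"
    proof (rule comp_edge[OF iso])
      show "\<And>a. a \<in> path_V n \<Longrightarrow> ?\<sigma> a \<in> path_V n" unfolding path_V_def by auto
      show "\<And>a b. a \<in> path_V n \<Longrightarrow> b \<in> path_V n \<Longrightarrow> {a,b} \<in> path_E n \<Longrightarrow> {?\<sigma> a, ?\<sigma> b} \<in> path_E n"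
        using refl_edge by blast
    qed
    have "good VR ER ((\<phi> \<circ> ?\<sigma>) 1) False"
      using iso_good[OF iso path_te fin path_ni[OF n0] lb bij ed nt(1) nt(2)] .
    moreover have "(\<phi> \<circ> ?\<sigma>) 1 = v" using v n by (simp add: numeral_2_eq_2)
    ultimately show ?thesis by simp
  qed
qed


lemma graph_edge:
  assumes "graph V E" "{a,b} \<in> E" shows "a \<in> V \<and> b \<in> V \<and> a \<noteq> b"
proof -
  have "\<forall>e\<in>E. \<exists>x y. x \<in> V \<and> y \<in> V \<and> x \<noteq> y \<and> e = {x, y}" using assms(1)[unfolded graph_def] by (rule conjunct2)
  then obtain x y where "x \<in> V" "y \<in> V" "x \<noteq> y" "{a,b} = {x,y}" using assms(2) by meson
  then show ?thesis by (metis doubleton_eq_iff)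
qed

lemma leaf_nbr:
  assumes "leaf V E l" "{l,z} \<in> E" "{l,w} \<in> E" shows "z = w"
proof -
  have "card {y. {l,y} \<in> E} = 1" using assms(1) unfolding leaf_def deg_def by simp
  then obtain a where S: "{y. {l,y} \<in> E} = {a}" using card_1_singletonE by blast
  have "z \<in> {y. {l,y} \<in> E}" "w \<in> {y. {l,y} \<in> E}" using assms(2,3) by simp_all
  then show ?thesis unfolding S by simp
qed

lemma part2:
  assumes gG: "graph V E" and niG: "no_isolated V E" and uv: "{u,v} \<in> E"
    and su: "support_vertex V E u"
    and c2: "2 \<le> card {x. {v,x} \<in> E \<and> leaf V E x}"
  shows "b_tR V E \<le> enat (deg E v - card {x. {v,x} \<in> E \<and> leaf V E x})"
proof -
  define L where "L = {x. {v,x} \<in> E \<and> leaf V E x}"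
  define Nv where "Nv = {x. {v,x} \<in> E}"
  define NL where "NL = Nv - L"
  define VR where "VR = insert v L"
  define ER where "ER = {{v,l} | l. l \<in> L}"
  define VH where "VH = V - VR"
  define EH where "EH = {e \<in> E. e \<inter> VR = {}}"
  define F where "F = (\<lambda>w. {v,w}) ` NL"
  have finV: "finite V" using gG[unfolded graph_def] by (rule conjunct1)
  have ge: "\<And>a b. {a,b} \<in> E \<Longrightarrow> a \<in> V \<and> b \<in> V \<and> a \<noteq> b" using graph_edge[OF gG] .
  have NvV: "Nv \<subseteq> V" unfolding Nv_def using ge by blast
  have finNv: "finite Nv" using finite_subset[OF NvV finV] .
  have LNv: "L \<subseteq> Nv" unfolding L_def Nv_def by blast
  have finL: "finite L" using finite_subset[OF LNv finNv] .
  have vL: "v \<notin> L"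
  proof
    assume "v \<in> L" then have "{v,v} \<in> E" unfolding L_def by blast
    then show False using ge by blast
  qed
  have Lnb: "\<And>l z. l \<in> L \<Longrightarrow> {l,z} \<in> E \<Longrightarrow> z = v"
  proof -
    fix l z assume l: "l \<in> L" and e: "{l,z} \<in> E"
    have "{l,v} \<in> E" "leaf V E l" using l unfolding L_def by (auto simp: insert_commute)
    then show "z = v" using leaf_nbr e by metis
  qed
  have degv: "deg E v = card Nv" unfolding deg_def Nv_def by simp
  have cNv: "2 \<le> card Nv" using card_mono[OF finNv LNv] c2 unfolding L_def by simp
  have vnl: "\<not> leaf V E v" using cNv degv unfolding leaf_def by simp
  have uL: "u \<notin> L"
  proof
    assume uL: "u \<in> L"
    obtain y where y: "{u,y} \<in> E" "leaf V E y" using su unfolding support_vertex_def by blast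
    have "y = v" using Lnb[OF uL y(1)] .
    then show False using y(2) vnl by simp
  qed
  have uv': "{v,u} \<in> E" using uv by (simp add: insert_commute)
  have uVH: "u \<in> VH" using uL ge[OF uv] unfolding VH_def VR_def by auto
  have VRV: "VR \<subseteq> V" unfolding VR_def using ge[OF uv] LNv NvV by blast
  have VU: "VH \<union> VR = V" using VRV unfolding VH_def by blast
  have disj: "VH \<inter> VR = {}" unfolding VH_def by blast
  have EU: "EH \<union> ER \<union> F = E"
  proof
    show "EH \<union> ER \<union> F \<subseteq> E"
    proof -
      have "ER \<subseteq> E" unfolding ER_def L_def by blast
      moreover have "F \<subseteq> E" unfolding F_def NL_def Nv_def by blast
      moreover have "EH \<subseteq> E" unfolding EH_def by blast
      ultimately show ?thesis by blast
    qed
    show "E \<subseteq> EH \<union> ER \<union> F"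
    proof
      fix e assume e: "e \<in> E"
      have "\<forall>e\<in>E. \<exists>x y. x \<in> V \<and> y \<in> V \<and> x \<noteq> y \<and> e = {x, y}" using gG[unfolded graph_def] by (rule conjunct2)
      then obtain a b where ab: "e = {a,b}" using e by meson
      show "e \<in> EH \<union> ER \<union> F"
      proof (cases "v \<in> e")
        case True
        have "v = a \<or> v = b" using True ab by simp
        then obtain w where w: "e = {v,w}"
        proof
          assume "v = a" then show ?thesis using ab that by blast
        next
          assume "v = b" then have "e = {v,a}" using ab by (simp add: insert_commute)
          then show ?thesis using that by blast
        qed
        then have wN: "w \<in> Nv" using e unfolding Nv_def by simp
        show ?thesis
        proof (cases "w \<in> L")
          case True then have "e \<in> ER" unfolding ER_def using w by blast
          then show ?thesis by blast
        next
          case False then have "e \<in> F" unfolding F_def NL_def using w wN by blast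
          then show ?thesis by blast
        qed
      next
        case False
        have "a \<notin> L"
        proof
          assume "a \<in> L" then have "b = v" using Lnb e ab by blast
          then show False using False ab by simp
        qed
        moreover have "b \<notin> L"
        proof
          assume "b \<in> L" then have "a = v" using Lnb e ab by (metis insert_commute)
          then show False using False ab by simp
        qed
        ultimately have "e \<inter> VR = {}" using False ab unfolding VR_def by auto
        then show ?thesis unfolding EH_def using e by blast
      qed
    qed
  qed
  have Fd: "F \<inter> (EH \<union> ER) = {}"
  proof -
    have "F \<inter> EH = {}" unfolding F_def EH_def VR_def by blast
    moreover have "F \<inter> ER = {}"
    proof (rule ccontr)
      assume "F \<inter> ER \<noteq> {}"
      then obtain w l where w: "w \<in> NL" "l \<in> L" "{v,w} = {v,l}" unfolding F_def ER_def by blast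
      then have "w = l \<or> (w = v \<and> l = v)" by (metis doubleton_eq_iff)
      then show False using w vL unfolding NL_def by blast
    qed
    ultimately show ?thesis by blast
  qed
  have uvF: "{u,v} \<in> F"
  proof -
    have "u \<in> NL" unfolding NL_def Nv_def using uv' uL by blast
    then show ?thesis unfolding F_def by (auto simp: insert_commute)
  qed
  have cF: "card F = deg E v - card L"
  proof -
    have "inj_on (\<lambda>w. {v,w}) NL" by (rule inj_onI) (metis doubleton_eq_iff)
    then have "card F = card NL" unfolding F_def by (rule card_image)
    also have "card NL = card Nv - card L" unfolding NL_def using card_Diff_subset[OF finL LNv] .
    finally show ?thesis using degv by simp
  qed
  have gH: "graph VH EH" unfolding graph_def
  proof
    show "finite VH" unfolding VH_def using finV by simp
    show "\<forall>e\<in>EH. \<exists>x y. x \<in> VH \<and> y \<in> VH \<and> x \<noteq> y \<and> e = {x, y}"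
    proof
      fix e assume e: "e \<in> EH"
      have "\<forall>e\<in>E. \<exists>x y. x \<in> V \<and> y \<in> V \<and> x \<noteq> y \<and> e = {x, y}" using gG[unfolded graph_def] by (rule conjunct2)
      moreover have "e \<in> E" using e unfolding EH_def by simp
      ultimately obtain a b where ab: "a \<in> V" "b \<in> V" "a \<noteq> b" "e = {a,b}" by meson
      have "a \<notin> VR" "b \<notin> VR" using e ab(4) unfolding EH_def by auto
      then have "a \<in> VH" "b \<in> VH" using ab unfolding VH_def by auto
      then show "\<exists>x y. x \<in> VH \<and> y \<in> VH \<and> x \<noteq> y \<and> e = {x, y}" using ab by (intro exI[of _ a] exI[of _ b]) simp
    qed
  qed
  have niH: "no_isolated VH EH" unfolding no_isolated_def
  proof
    fix x assume x: "x \<in> VH"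
    then have xV: "x \<in> V" and xv: "x \<noteq> v" and xL: "x \<notin> L" unfolding VH_def VR_def by auto
    obtain y where y: "{x,y} \<in> E" using niG xV unfolding no_isolated_def by blast
    have notL: "z \<notin> L" if "{x,z} \<in> E" for z
    proof
      assume "z \<in> L" then have "x = v" using Lnb that by (metis insert_commute)
      then show False using xv by simp
    qed
    show "\<exists>y. {x,y} \<in> EH"
    proof (cases "y = v")
      case False
      then have "{x,y} \<inter> VR = {}" using notL[OF y] xv xL unfolding VR_def by auto
      then show ?thesis using y unfolding EH_def by blast
    next
      case True
      have "{v,x} \<in> E" using y True by (simp add: insert_commute)
      then have "\<not> leaf V E x" using xL unfolding L_def by blast
      then have d: "card {z. {x,z} \<in> E} \<noteq> 1" using xV unfolding leaf_def deg_def by simp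
      have "{z. {x,z} \<in> E} \<noteq> {v}"
      proof
        assume "{z. {x,z} \<in> E} = {v}" then have "card {z. {x,z} \<in> E} = 1" by simp
        then show False using d by simp
      qed
      moreover have "v \<in> {z. {x,z} \<in> E}" using y True by simp
      ultimately obtain z where z: "{x,z} \<in> E" "z \<noteq> v" by blast
      then have "{x,z} \<inter> VR = {}" using notL[OF z(1)] xv xL unfolding VR_def by auto
      then show ?thesis using z unfolding EH_def by blast
    qed
  qed
  have erV: "\<And>x y. {x,y} \<in> ER \<Longrightarrow> x \<in> VR"
  proof -
    fix x y assume "{x,y} \<in> ER"
    then obtain l where l: "l \<in> L" "{x,y} = {v,l}" unfolding ER_def by blast
    then have "x = v \<or> x = l" by (metis doubleton_eq_iff)
    then show "x \<in> VR" using l unfolding VR_def by blast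
  qed
  have finR: "finite VR" unfolding VR_def using finL by simp
  have "L \<noteq> {}"
  proof
    assume "L = {}" then show False using c2 unfolding L_def[symmetric] by simp
  qed
  then obtain l0 where l0: "l0 \<in> L" by blast
  have niR: "no_isolated VR ER" unfolding no_isolated_def
  proof
    fix x assume "x \<in> VR"
    then have "x = v \<or> x \<in> L" unfolding VR_def by blast
    then show "\<exists>y. {x,y} \<in> ER"
    proof
      assume "x = v" then have "{x,l0} \<in> ER" unfolding ER_def using l0 by blast
      then show ?thesis by blast
    next
      assume "x \<in> L" then have "{x,v} \<in> ER" unfolding ER_def by (auto simp: insert_commute)
      then show ?thesis by blast
    qed
  qed
  have lb: "3 \<le> sum h VR" if "trdf VR ER h" for h
    using star_lb[OF vL finL _ that[unfolded VR_def ER_def]] c2 unfolding VR_def L_def by simp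
  define g where "g x = (if x = v then 2 else (0::nat))" for x
  have gn: "ntr VR ER g v False" unfolding ntr_def
  proof
    fix x assume "x \<in> VR"
    then have "x = v \<or> x \<in> L" unfolding VR_def by blast
    then show "g x \<le> 2 \<and> (g x = 0 \<longrightarrow> (\<exists>y\<in>VR. {x, y} \<in> ER \<and> g y = 2) \<or> x = v \<and> False)
        \<and> (0 < g x \<longrightarrow> (\<exists>y\<in>VR. {x, y} \<in> ER \<and> 0 < g y) \<or> x = v)"
    proof
      assume "x = v" then show ?thesis unfolding g_def by simp
    next
      assume xL: "x \<in> L"
      then have "x \<noteq> v" using vL by blast
      moreover have "{x,v} \<in> ER" unfolding ER_def using xL by (auto simp: insert_commute)
      moreover have "v \<in> VR" unfolding VR_def by simp
      ultimately show ?thesis unfolding g_def by auto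
    qed
  qed
  have gs: "sum g VR < 3"
  proof -
    have "sum g VR = g v + sum g L" unfolding VR_def using vL finL by simp
    moreover have "sum g L = 0" unfolding g_def using vL by (auto intro: sum.neutral)
    ultimately show ?thesis unfolding g_def by simp
  qed
  obtain f where f: "trdf VH EH f" "sum f VH = gamma_tR VH EH"
    using gamma_ex[OF ones_trdf[OF niH]] by blast
  have fH: "gamma_tR_fun VH EH f" unfolding gamma_tR_fun_def using f by blast
  have fu: "0 < f u"
  proof -
    obtain l where l: "{u,l} \<in> E" "leaf V E l" using su unfolding support_vertex_def by blast
    have lv: "l \<noteq> v" using l(2) vnl by blast
    have lL: "l \<notin> L"
    proof
      assume "l \<in> L" then have "u = v" using Lnb l(1) by (metis insert_commute)
      then show False using ge[OF uv] by simp
    qed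
    have lV: "l \<in> V" using ge[OF l(1)] by blast
    have lH: "l \<in> VH" using lV lv lL unfolding VH_def VR_def by blast
    have onlyu: "y = u" if "{l,y} \<in> EH" for y
    proof -
      have "{l,y} \<in> E" using that unfolding EH_def by blast
      moreover have "{l,u} \<in> E" using l(1) by (simp add: insert_commute)
      ultimately show ?thesis using leaf_nbr[OF l(2)] by blast
    qed
    show ?thesis
    proof (cases "f l = 0")
      case True
      then obtain y where "{l,y} \<in> EH" "f y = 2" using f(1) lH unfolding trdf_def by blast
      then show ?thesis using onlyu by fastforce
    next
      case False
      then obtain y where "{l,y} \<in> EH" "0 < f y" using f(1) lH unfolding trdf_def by blast
      then show ?thesis using onlyu by fastforce
    qed
  qed
  have "b_tR (VH \<union> VR) (EH \<union> ER \<union> F) \<le> enat (card F)"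
    using combine[OF gH niH disj uVH erV finR niR lb gn gs fH fu _ Fd uvF] by simp
  then show ?thesis using VU EU cF unfolding L_def by simp
qed


lemma part1_all:
  assumes gH: "graph VH EH" and niH: "no_isolated VH EH" and disj: "VH \<inter> VR = {}" and uH: "u \<in> VH"
    and cs: "( ((\<exists>r \<phi>. r \<ge> 2 \<and> graph_iso (star_V r) (star_E r) VR ER \<phi> \<and> v = \<phi> 0)
            \<or> (\<exists>n \<phi>. n \<ge> 5 \<and> graph_iso (cycle_V n) (cycle_E n) VR ER \<phi> \<and> v \<in> VR)
            \<or> (\<exists>n \<phi>. n \<ge> 5 \<and> graph_iso (path_V n) (path_E n) VR ER \<phi> \<and> support_vertex VR ER v))
           \<and> (\<exists>f. gamma_tR_fun VH EH f \<and> f u > 0))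
        \<or> ((\<exists>r \<phi>. r \<ge> 2 \<and> graph_iso (spider_V r) (spider_E r) VR ER \<phi> \<and> v = \<phi> 0)
           \<and> (\<exists>f. gamma_tR_fun VH EH f \<and> f u = 2))"
    and gG: "graph (VH \<union> VR) (EH \<union> ER \<union> F)" and Fd: "F \<inter> (EH \<union> ER) = {}"
    and finF: "finite F" and cF: "card F = s" and uvF: "{u, v} \<in> F"
  shows "b_tR (VH \<union> VR) (EH \<union> ER \<union> F) \<le> enat s"
proof -
  from cs show ?thesis
  proof
    assume A: "((\<exists>r \<phi>. r \<ge> 2 \<and> graph_iso (star_V r) (star_E r) VR ER \<phi> \<and> v = \<phi> 0)
            \<or> (\<exists>n \<phi>. n \<ge> 5 \<and> graph_iso (cycle_V n) (cycle_E n) VR ER \<phi> \<and> v \<in> VR)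
            \<or> (\<exists>n \<phi>. n \<ge> 5 \<and> graph_iso (path_V n) (path_E n) VR ER \<phi> \<and> support_vertex VR ER v))
           \<and> (\<exists>f. gamma_tR_fun VH EH f \<and> f u > 0)"
    then have "\<exists>f. gamma_tR_fun VH EH f \<and> f u > 0" by (rule conjunct2)
    then obtain f where f: "gamma_tR_fun VH EH f" "0 < f u" by blast
    have D: "(\<exists>r \<phi>. r \<ge> 2 \<and> graph_iso (star_V r) (star_E r) VR ER \<phi> \<and> v = \<phi> 0)
            \<or> (\<exists>n \<phi>. n \<ge> 5 \<and> graph_iso (cycle_V n) (cycle_E n) VR ER \<phi> \<and> v \<in> VR)
            \<or> (\<exists>n \<phi>. n \<ge> 5 \<and> graph_iso (path_V n) (path_E n) VR ER \<phi> \<and> support_vertex VR ER v)"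
      using A by (rule conjunct1)
    have g: "good VR ER v False"
      using D
    proof (elim disjE)
      assume "\<exists>r \<phi>. r \<ge> 2 \<and> graph_iso (star_V r) (star_E r) VR ER \<phi> \<and> v = \<phi> 0"
      then obtain r \<phi> where a: "r \<ge> 2" "graph_iso (star_V r) (star_E r) VR ER \<phi>" "v = \<phi> 0" by blast
      show ?thesis using star_good[OF a(1,2)] a(3) by simp
    next
      assume "\<exists>n \<phi>. n \<ge> 5 \<and> graph_iso (cycle_V n) (cycle_E n) VR ER \<phi> \<and> v \<in> VR"
      then obtain n \<phi> where a: "n \<ge> 5" "graph_iso (cycle_V n) (cycle_E n) VR ER \<phi>" "v \<in> VR" by blast
      show ?thesis using cycle_good[OF a] .
    next
      assume "\<exists>n \<phi>. n \<ge> 5 \<and> graph_iso (path_V n) (path_E n) VR ER \<phi> \<and> support_vertex VR ER v"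
      then obtain n \<phi> where a: "n \<ge> 5" "graph_iso (path_V n) (path_E n) VR ER \<phi>" "support_vertex VR ER v" by blast
      show ?thesis using path_good[OF a] .
    qed
    have fc: "False \<longrightarrow> f u = 2" by simp
    show ?thesis using part1[OF g gH niH disj uH f(1) f(2) fc Fd uvF cF] .
  next
    assume B: "(\<exists>r \<phi>. r \<ge> 2 \<and> graph_iso (spider_V r) (spider_E r) VR ER \<phi> \<and> v = \<phi> 0)
           \<and> (\<exists>f. gamma_tR_fun VH EH f \<and> f u = 2)"
    then have "\<exists>f. gamma_tR_fun VH EH f \<and> f u = 2" by (rule conjunct2)
    then obtain f where f: "gamma_tR_fun VH EH f" "f u = 2" by blast
    from B have "\<exists>r \<phi>. r \<ge> 2 \<and> graph_iso (spider_V r) (spider_E r) VR ER \<phi> \<and> v = \<phi> 0" by (rule conjunct1)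
    then obtain r \<phi> where a: "r \<ge> 2" "graph_iso (spider_V r) (spider_E r) VR ER \<phi>" "v = \<phi> 0" by blast
    have g: "good VR ER v True" using spider_good[OF a(1,2)] a(3) by simp
    have fu: "0 < f u" using f(2) by simp
    have fc: "True \<longrightarrow> f u = 2" using f(2) by simp
    show ?thesis using part1[OF g gH niH disj uH f(1) fu fc Fd uvF cF] .
  qed
qed

theorem mainTheorem9:
  shows
  "(\<forall>(VH :: 'a set) EH VR ER v u F s.
      graph VH EH \<and> no_isolated VH EH \<and> VH \<inter> VR = {} \<and> u \<in> VH
      \<and> ( ( ((\<exists>r \<phi>. r \<ge> 2 \<and> graph_iso (star_V r) (star_E r) VR ER \<phi> \<and> v = \<phi> 0)
            \<or> (\<exists>n \<phi>. n \<ge> 5 \<and> graph_iso (cycle_V n) (cycle_E n) VR ER \<phi> \<and> v \<in> VR)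
            \<or> (\<exists>n \<phi>. n \<ge> 5 \<and> graph_iso (path_V n) (path_E n) VR ER \<phi> \<and> support_vertex VR ER v))
           \<and> (\<exists>f. gamma_tR_fun VH EH f \<and> f u > 0))
        \<or> ((\<exists>r \<phi>. r \<ge> 2 \<and> graph_iso (spider_V r) (spider_E r) VR ER \<phi> \<and> v = \<phi> 0)
           \<and> (\<exists>f. gamma_tR_fun VH EH f \<and> f u = 2)))
      \<and> graph (VH \<union> VR) (EH \<union> ER \<union> F) \<and> F \<inter> (EH \<union> ER) = {}
      \<and> finite F \<and> card F = s \<and> {u, v} \<in> F
      \<longrightarrow> b_tR (VH \<union> VR) (EH \<union> ER \<union> F) \<le> enat s)
   \<and> (\<forall>(V :: 'a set) E u v.
      graph V E \<and> no_isolated V E \<and> {u, v} \<in> E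
      \<and> support_vertex V E u \<and> support_vertex V E v
      \<and> card {x. {v, x} \<in> E \<and> leaf V E x} \<ge> 2
      \<longrightarrow> b_tR V E \<le> enat (deg E v - card {x. {v, x} \<in> E \<and> leaf V E x}))"
proof (intro conjI allI impI)
  fix VH EH VR ER v u F s
  assume h: "graph (VH :: 'a set) EH \<and> no_isolated VH EH \<and> VH \<inter> VR = {} \<and> u \<in> VH
      \<and> ( ( ((\<exists>r \<phi>. r \<ge> 2 \<and> graph_iso (star_V r) (star_E r) VR ER \<phi> \<and> v = \<phi> 0)
            \<or> (\<exists>n \<phi>. n \<ge> 5 \<and> graph_iso (cycle_V n) (cycle_E n) VR ER \<phi> \<and> v \<in> VR)
            \<or> (\<exists>n \<phi>. n \<ge> 5 \<and> graph_iso (path_V n) (path_E n) VR ER \<phi> \<and> support_vertex VR ER v))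
           \<and> (\<exists>f. gamma_tR_fun VH EH f \<and> f u > 0))
        \<or> ((\<exists>r \<phi>. r \<ge> 2 \<and> graph_iso (spider_V r) (spider_E r) VR ER \<phi> \<and> v = \<phi> 0)
           \<and> (\<exists>f. gamma_tR_fun VH EH f \<and> f u = 2)))
      \<and> graph (VH \<union> VR) (EH \<union> ER \<union> F) \<and> F \<inter> (EH \<union> ER) = {}
      \<and> finite F \<and> card F = s \<and> {u, v} \<in> F"
  from h show "b_tR (VH \<union> VR) (EH \<union> ER \<union> F) \<le> enat s"
    by (elim conjE) (rule part1_all, assumption+)
next
  fix V E u v
  assume h: "graph (V :: 'a set) E \<and> no_isolated V E \<and> {u, v} \<in> E
      \<and> support_vertex V E u \<and> support_vertex V E v
      \<and> card {x. {v, x} \<in> E \<and> leaf V E x} \<ge> 2"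
  show "b_tR V E \<le> enat (deg E v - card {x. {v, x} \<in> E \<and> leaf V E x})"
    using h by (elim conjE) (rule part2, assumption+)
qed

end
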